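(* Let $S$ be a 3-SAT instance with $n$ variables and $m$ clauses, and let $G(S)$ be the graph associated to $S$ as described in the context. If $\operatorname{cdim}(G(S))=2(m+n)$, then $S$ is satisfiable.
   Context: All graphs are finite, simple, undirected. For distinct vertices $v,w$, $\kappa(v,w)$ is the maximum number of internally vertex-disjoint $v$–$w$ paths (an edge $vw$ counts as one such path); $\kappa(v,v)=\infty$. For an ordered vertex set $W=(w_1,\ldots,w_k)$, $r_G(v,W)=[\kappa(v,w_1),\ldots,\kappa(v,w_k)]$. $W$ is resolving if $r_G(v_1,W)=r_G(v_2,W)$ implies $v_1=v_2$; $\operatorname{cdim}(G)$ is the minimum cardinality of a resolving set. Construction of $G(S)$: $S$ is a CNF formula on variables $X_1,\ldots,X_n$ with clauses $C_1,\ldots,C_m$, each clause a disjunction of at most three literals on pairwise distinct variables, and every variable occurring in at least one clause. For each variable $X_i$ take a gadget on vertices $x_i^1,\ldots,x_i^5$ with edges $x_i^1x_i^2, x_i^1x_i^3, x_i^1x_i^4, x_i^1x_i^5, x_i^2x_i^3, x_i^2x_i^4, x_i^2x_i^5, x_i^3x_i^4, x_i^3x_i^5$ (i.e. $K_5$ minus the edge $x_i^4x_i^5$). For each clause $C_j$ take a gadget on vertices $c_j^1,\ldots,c_j^6$ with edges: $c_j^3,c_j^4,c_j^5$ pairwise adjacent, and each of $c_j^1,c_j^2,c_j^6$ adjacent to each of $c_j^3,c_j^4,c_j^5$ (no other edges). All gadgets are vertex-disjoint. Further edges: if $X_i$ occurs as a positive literal in $C_j$, add $c_j^1x_i^1$,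 $c_j^2x_i^1$, $c_j^2x_i^2$; if $X_i$ occurs as a negative literal in $C_j$, add $c_j^1x_i^1$, $c_j^1x_i^2$, $c_j^2x_i^2$; no edges between the gadgets of $X_i$ and $C_j$ if $X_i$ does not occur in $C_j$. Finally, for every pair of distinct clauses $C_j\neq C_k$ add the edges $c_j^1c_k^1$, $c_j^1c_k^2$, $c_j^2c_k^1$, $c_j^2c_k^2$. *)

theory Defs
  imports Main "HOL-Library.Extended_Nat"
begin

text \<open>A graph is given by a vertex set V and a (symmetric, irreflexive) adjacency
  predicate E.\<close>

definition is_path :: "'a set \<Rightarrow> ('a \<Rightarrow> 'a \<Rightarrow> bool) \<Rightarrow> 'a \<Rightarrow> 'a \<Rightarrow> 'a list \<Rightarrow> bool" where
  "is_path V E v w p \<longleftrightarrow> p \<noteq> [] \<and> hd p = v \<and> last p = w \<and> distinct p \<and> set p \<subseteq> V \<and>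
     (\<forall>i. Suc i < length p \<longrightarrow> E (p ! i) (p ! Suc i))"

definition interior :: "'a list \<Rightarrow> 'a set" where
  "interior p = set (butlast (tl p))"

text \<open>A set of pairwise internally vertex-disjoint v-w paths (the single-edge path
  [v,w] can occur at most once, since P is a set).\<close>
definition int_disjoint_paths :: "'a set \<Rightarrow> ('a \<Rightarrow> 'a \<Rightarrow> bool) \<Rightarrow> 'a \<Rightarrow> 'a \<Rightarrow> 'a list set \<Rightarrow> bool" where
  "int_disjoint_paths V E v w P \<longleftrightarrow> (\<forall>p\<in>P. is_path V E v w p) \<and>
     (\<forall>p\<in>P. \<forall>q\<in>P. p \<noteq> q \<longrightarrow> interior p \<inter> interior q = {})"

definition kappa :: "'a set \<Rightarrow> ('a \<Rightarrow> 'a \<Rightarrow> bool) \<Rightarrow> 'a \<Rightarrow> 'a \<Rightarrow> enat" where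
  "kappa V E v w = (if v = w then \<infinity>
     else enat (Max (card ` {P. int_disjoint_paths V E v w P})))"

text \<open>W resolving: vertices with equal vectors (kappa(v,w_1),...,kappa(v,w_k)) coincide.
  Equality of these ordered vectors is componentwise equality over the elements of W.\<close>
definition resolving :: "'a set \<Rightarrow> ('a \<Rightarrow> 'a \<Rightarrow> bool) \<Rightarrow> 'a set \<Rightarrow> bool" where
  "resolving V E W \<longleftrightarrow> W \<subseteq> V \<and>
     (\<forall>v1\<in>V. \<forall>v2\<in>V. (\<forall>w\<in>W. kappa V E v1 w = kappa V E v2 w) \<longrightarrow> v1 = v2)"

definition cdim :: "'a set \<Rightarrow> ('a \<Rightarrow> 'a \<Rightarrow> bool) \<Rightarrow> nat" where
  "cdim V E = (LEAST k. \<exists>W. resolving V E W \<and> finite W \<and> card W = k)"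

text \<open>Variables are X_0,...,X_{n-1}; a literal is (i, True) for X_i and (i, False) for
  the negation of X_i; a formula is a list of clauses C_0,...,C_{m-1}, each a set of literals.\<close>

type_synonym literal = "nat \<times> bool"
type_synonym clause = "literal set"

definition sat3_instance :: "nat \<Rightarrow> clause list \<Rightarrow> bool" where
  "sat3_instance n cs \<longleftrightarrow>
     (\<forall>C\<in>set cs. C \<noteq> {} \<and> card C \<le> 3 \<and> finite C \<and>
        (\<forall>(i,b)\<in>C. i < n) \<and>
        (\<forall>(i,b)\<in>C. \<forall>(i',b')\<in>C. i = i' \<longrightarrow> b = b')) \<and>
     (\<forall>i<n. \<exists>C\<in>set cs. \<exists>b. (i,b) \<in> C)"

definition satisfiable :: "clause list \<Rightarrow> bool" where
  "satisfiable cs \<longleftrightarrow> (\<exists>\<sigma> :: nat \<Rightarrow> bool. \<forall>C\<in>set cs. \<exists>(i,b)\<in>C. \<sigma> i = b)"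

datatype gvert = XV nat nat | CV nat nat   \<comment> \<open>XV i k = x_i^k, CV j k = c_j^k\<close>

definition GV :: "nat \<Rightarrow> clause list \<Rightarrow> gvert set" where
  "GV n cs = {XV i k | i k. i < n \<and> k \<in> {1..5}} \<union> {CV j k | j k. j < length cs \<and> k \<in> {1..6}}"

definition GE0 :: "nat \<Rightarrow> clause list \<Rightarrow> gvert \<Rightarrow> gvert \<Rightarrow> bool" where
  "GE0 n cs u v \<longleftrightarrow>
     (\<exists>i a b. i < n \<and> u = XV i a \<and> v = XV i b \<and>
        (a, b) \<in> {(1,2),(1,3),(1,4),(1,5),(2,3),(2,4),(2,5),(3,4),(3,5)}) \<or>
     (\<exists>j a b. j < length cs \<and> u = CV j a \<and> v = CV j b \<and>
        (a, b) \<in> {(3,4),(3,5),(4,5)} \<union> ({1,2,6} \<times> {3,4,5})) \<or>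
     (\<exists>j i. j < length cs \<and> i < n \<and> (i, True) \<in> cs ! j \<and>
        ((u = CV j 1 \<and> v = XV i 1) \<or> (u = CV j 2 \<and> v = XV i 1) \<or> (u = CV j 2 \<and> v = XV i 2))) \<or>
     (\<exists>j i. j < length cs \<and> i < n \<and> (i, False) \<in> cs ! j \<and>
        ((u = CV j 1 \<and> v = XV i 1) \<or> (u = CV j 1 \<and> v = XV i 2) \<or> (u = CV j 2 \<and> v = XV i 2))) \<or>
     (\<exists>j k a b. j < length cs \<and> k < length cs \<and> j \<noteq> k \<and> a \<in> {1,2} \<and> b \<in> {1,2} \<and>
        u = CV j a \<and> v = CV k b)"

definition GE :: "nat \<Rightarrow> clause list \<Rightarrow> gvert \<Rightarrow> gvert \<Rightarrow> bool" where
  "GE n cs u v \<longleftrightarrow> GE0 n cs u v \<or> GE0 n cs v u"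

end

theory Submission
  imports Defs
begin

lemma is_path_finite:
  assumes "finite V" shows "finite {p. is_path V E v w p}"
proof -
  have "{p. is_path V E v w p} \<subseteq> {xs. set xs \<subseteq> V \<and> distinct xs}"
    by (auto simp: is_path_def)
  thus ?thesis using finite_subset_distinct[OF assms] finite_subset by blast
qed

lemma idp_finite:
  assumes "finite V" shows "finite {P. int_disjoint_paths V E v w P}"
proof -
  have "{P. int_disjoint_paths V E v w P} \<subseteq> Pow {p. is_path V E v w p}"
    by (auto simp: int_disjoint_paths_def)
  thus ?thesis using is_path_finite[OF assms] finite_subset by blast
qed

lemma idp_P_finite:
  assumes "finite V" "int_disjoint_paths V E v w P" shows "finite P"
proof -
  have "P \<subseteq> {p. is_path V E v w p}" using assms(2) by (auto simp: int_disjoint_paths_def)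
  thus ?thesis using is_path_finite[OF assms(1)] finite_subset by blast
qed

lemma idp_empty: "int_disjoint_paths V E v w {}"
  by (simp add: int_disjoint_paths_def)

lemma kappa_ge:
  assumes "finite V" "v \<noteq> w" "int_disjoint_paths V E v w P"
  shows "enat (card P) \<le> kappa V E v w"
proof -
  have "card P \<le> Max (card ` {P. int_disjoint_paths V E v w P})"
    using assms by (intro Max_ge) (auto intro: finite_imageI idp_finite)
  thus ?thesis using assms(2) by (simp add: kappa_def)
qed

lemma kappa_le:
  assumes "finite V" "v \<noteq> w" "\<And>P. int_disjoint_paths V E v w P \<Longrightarrow> card P \<le> N"
  shows "kappa V E v w \<le> enat N"
proof -
  have "Max (card ` {P. int_disjoint_paths V E v w P}) \<le> N"
    using assms idp_empty[of V E v w]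
    by (subst Max_le_iff) (auto intro: finite_imageI idp_finite)
  thus ?thesis using assms(2) by (simp add: kappa_def)
qed

lemma kappa_eqI:
  assumes "finite V" "v \<noteq> w" "\<And>P. int_disjoint_paths V E v w P \<Longrightarrow> card P \<le> N"
    "int_disjoint_paths V E v w P0" "card P0 = N"
  shows "kappa V E v w = enat N"
proof -
  have "kappa V E v w \<le> enat N" by (rule kappa_le[OF assms(1,2)]) (rule assms(3))
  thus ?thesis using kappa_ge[OF assms(1,2,4)] assms(5) by simp
qed

lemma kappa_fin: "v \<noteq> w \<Longrightarrow> kappa V E v w \<noteq> \<infinity>"
  by (simp add: kappa_def)

lemma kappa_refl: "kappa V E v v = \<infinity>"
  by (simp add: kappa_def)

lemma discrete_ivt:
  fixes f :: "nat \<Rightarrow> bool"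
  assumes "f j" "\<not> f e" "j \<le> e"
  shows "\<exists>l. j \<le> l \<and> l < e \<and> f l \<and> \<not> f (Suc l)"
  using assms
proof (induction e)
  case 0 thus ?case by auto
next
  case (Suc e)
  show ?case
  proof (cases "f e")
    case True
    thus ?thesis using Suc.prems by (intro exI[of _ e]) (auto simp: le_Suc_eq)
  next
    case False
    hence "j \<noteq> Suc e" using Suc.prems by auto
    hence "j \<le> e" using Suc.prems by auto
    from Suc.IH[OF Suc.prems(1) False this] show ?thesis by auto
  qed
qed

lemma path_nth_hd: "is_path V E v w p \<Longrightarrow> p ! 0 = v"
  by (auto simp: is_path_def hd_conv_nth)

lemma path_nth_last: "is_path V E v w p \<Longrightarrow> p ! (length p - 1) = w"
  by (auto simp: is_path_def last_conv_nth)

lemma path_len: "is_path V E v w p \<Longrightarrow> v \<noteq> w \<Longrightarrow> length p \<ge> 2"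
proof -
  assume a: "is_path V E v w p" "v \<noteq> w"
  hence "p \<noteq> []" by (auto simp: is_path_def)
  moreover have "length p \<noteq> 1"
  proof
    assume "length p = 1"
    hence "p ! 0 = p ! (length p - 1)" by simp
    thus False using path_nth_hd[OF a(1)] path_nth_last[OF a(1)] a(2) by simp
  qed
  ultimately show ?thesis by (cases p) (auto simp: Suc_le_eq)
qed

lemma mem_interior:
  assumes "x \<in> set p" "x \<noteq> hd p" "x \<noteq> last p"
  shows "x \<in> interior p"
proof -
  obtain a t where p: "p = a # t" using assms by (cases p) auto
  have "x \<in> set t" using assms p by auto
  hence "t \<noteq> []" by auto
  hence "t = butlast t @ [last t]" by simp
  moreover have "last t = last p" using p \<open>t \<noteq> []\<close> by simp
  ultimately have "x \<in> set (butlast t)" using \<open>x \<in> set t\<close> assms(3)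
    by (metis Un_iff empty_iff empty_set list.set(2) set_append singletonD)
  thus ?thesis by (simp add: interior_def p)
qed

lemma interior_subset: "interior p \<subseteq> set p"
  by (cases p) (auto simp: interior_def dest: in_set_butlastD)

lemma path_cut_cross:
  assumes p: "is_path V E v w p" and vw: "v \<noteq> w" and B: "v \<notin> B" "w \<in> B"
    and cut: "\<And>x y. x \<in> V \<Longrightarrow> y \<in> V \<Longrightarrow> E x y \<Longrightarrow> x \<notin> B \<Longrightarrow> y \<in> B \<Longrightarrow>
                x \<in> S \<or> y \<in> S \<or> (x = v \<and> y = w)"
  shows "p = [v, w] \<or> set p \<inter> S \<noteq> {}"
proof -
  let ?L = "length p"
  have L2: "?L \<ge> 2" using path_len[OF p vw] .
  have h0: "p ! 0 \<notin> B" using path_nth_hd[OF p] B by simp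
  have hL: "\<not> (p ! (?L - 1) \<notin> B)" using path_nth_last[OF p] B by simp
  obtain l where l: "l < ?L - 1" "p ! l \<notin> B" "p ! Suc l \<in> B"
    using discrete_ivt[of "\<lambda>k. p ! k \<notin> B" 0 "?L - 1"] h0 hL by auto
  have pd: "distinct p" "set p \<subseteq> V" "\<forall>i. Suc i < ?L \<longrightarrow> E (p ! i) (p ! Suc i)"
    using p by (auto simp: is_path_def)
  have inV: "p ! l \<in> V" "p ! Suc l \<in> V" using pd(2) l(1) by (auto intro!: nth_mem[THEN subsetD[OF pd(2)]])
  have e: "E (p ! l) (p ! Suc l)" using pd(3) l(1) by auto
  have lL: "Suc l < ?L" using l(1) by simp
  from cut[OF inV e l(2) l(3)]
  show ?thesis
  proof (elim disjE)
    assume "p ! l \<in> S"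
    moreover have "p ! l \<in> set p" using lL by simp
    ultimately show ?thesis by blast
  next
    assume "p ! Suc l \<in> S"
    moreover have "p ! Suc l \<in> set p" using lL by (intro nth_mem)
    ultimately show ?thesis by blast
  next
    assume a: "p ! l = v \<and> p ! Suc l = w"
    have "p ! l = p ! 0" using a path_nth_hd[OF p] by simp
    hence "l = 0" using nth_eq_iff_index_eq[OF pd(1), of l 0] lL by force
    moreover have "p ! Suc l = p ! (?L - 1)" using a path_nth_last[OF p] by simp
    hence "Suc l = ?L - 1" using nth_eq_iff_index_eq[OF pd(1)] lL L2 by simp
    ultimately have "?L = 2" by simp
    then obtain a1 a2 where "p = [a1, a2]"
      by (cases p; cases "tl p") auto
    thus ?thesis using a \<open>l = 0\<close> by simp
  qed
qed

lemma idp_card_cut: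
  assumes fV: "finite V" and vw: "v \<noteq> w" and fS: "finite S" and S: "v \<notin> S" "w \<notin> S"
    and meet: "\<And>p. is_path V E v w p \<Longrightarrow> p = [v, w] \<or> set p \<inter> S \<noteq> {}"
    and P: "int_disjoint_paths V E v w P"
  shows "card P \<le> card S + (if E v w then 1 else 0)"
proof -
  let ?P' = "P - {[v, w]}"
  define g where "g p = (SOME x. x \<in> set p \<inter> S)" for p :: "'a list"
  have fP: "finite P" using idp_P_finite[OF fV P] .
  have gS: "g p \<in> set p \<inter> S" if "p \<in> ?P'" for p
  proof -
    have "is_path V E v w p" using P that by (auto simp: int_disjoint_paths_def)
    hence "set p \<inter> S \<noteq> {}" using meet that by auto
    hence "\<exists>x. x \<in> set p \<inter> S" by blast
    thus ?thesis unfolding g_def by (rule someI_ex)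
  qed
  have gI: "g p \<in> interior p" if "p \<in> ?P'" for p
  proof -
    have pp: "is_path V E v w p" using P that by (auto simp: int_disjoint_paths_def)
    have "hd p = v" "last p = w" using pp by (auto simp: is_path_def)
    thus ?thesis using gS[OF that] S by (intro mem_interior) auto
  qed
  have inj: "inj_on g ?P'"
  proof (rule inj_onI)
    fix p q assume pq: "p \<in> ?P'" "q \<in> ?P'" "g p = g q"
    show "p = q"
    proof (rule ccontr)
      assume "p \<noteq> q"
      hence "interior p \<inter> interior q = {}" using P pq by (auto simp: int_disjoint_paths_def)
      thus False using gI[OF pq(1)] gI[OF pq(2)] pq(3) by auto
    qed
  qed
  have c1: "card ?P' \<le> card S"
    using card_inj_on_le[OF inj _ fS] gS by auto
  have c2: "card P \<le> card ?P' + (if [v, w] \<in> P then 1 else 0)"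
    using fP by (cases "[v,w] \<in> P") (auto simp: card_Diff_singleton)
  have c3: "[v, w] \<in> P \<Longrightarrow> E v w"
    using P by (auto simp: int_disjoint_paths_def is_path_def)
  show ?thesis using c1 c2 c3 by (auto split: if_splits)
qed

lemma kappa_cut:
  assumes fV: "finite V" and vw: "v \<noteq> w" and fS: "finite S" and S: "v \<notin> S" "w \<notin> S"
    and B: "v \<notin> B" "w \<in> B"
    and cut: "\<And>x y. x \<in> V \<Longrightarrow> y \<in> V \<Longrightarrow> E x y \<Longrightarrow> x \<notin> B \<Longrightarrow> y \<in> B \<Longrightarrow>
                x \<in> S \<or> y \<in> S \<or> (x = v \<and> y = w)"
  shows "kappa V E v w \<le> enat (card S + (if E v w then 1 else 0))"
proof (rule kappa_le[OF fV vw])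
  fix P assume "int_disjoint_paths V E v w P"
  thus "card P \<le> card S + (if E v w then 1 else 0)"
    using idp_card_cut[OF fV vw fS S] path_cut_cross[OF _ vw B cut] by blast
qed

lemma kappa_attained:
  assumes "finite V" "v \<noteq> w"
  shows "\<exists>P. int_disjoint_paths V E v w P \<and> kappa V E v w = enat (card P)"
proof -
  let ?C = "card ` {P. int_disjoint_paths V E v w P}"
  have "finite ?C" using idp_finite[OF assms(1)] by auto
  moreover have "?C \<noteq> {}" using idp_empty[of V E v w] by auto
  ultimately have "Max ?C \<in> ?C" by (rule Max_in)
  then obtain P where "int_disjoint_paths V E v w P" "card P = Max ?C" by auto
  thus ?thesis using assms(2) by (auto simp: kappa_def)
qed

lemma kappa_mono_map:
  assumes fV: "finite V" and vw: "v \<noteq> w" and v'w': "v' \<noteq> w'"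
    and map: "\<And>P. int_disjoint_paths V E v w P \<Longrightarrow>
               \<exists>P'. int_disjoint_paths V E v' w' P' \<and> card P' = card P"
  shows "kappa V E v w \<le> kappa V E v' w'"
proof -
  obtain P where P: "int_disjoint_paths V E v w P" "kappa V E v w = enat (card P)"
    using kappa_attained[OF fV vw] by blast
  obtain P' where "int_disjoint_paths V E v' w' P'" "card P' = card P" using map[OF P(1)] by blast
  thus ?thesis using P(2) kappa_ge[OF fV v'w'] by metis
qed

lemma kappa_auto_le:
  assumes fV: "finite V" and inv: "\<And>x. f (f x) = x" and fVV: "\<And>x. x \<in> V \<longleftrightarrow> f x \<in> V"
    and fE: "\<And>x y. E (f x) (f y) = E x y"
  shows "kappa V E v w \<le> kappa V E (f v) (f w)"
proof (cases "v = w")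
  case True thus ?thesis by (simp add: kappa_def)
next
  case False
  have inj: "inj f" by (rule injI) (metis inv)
  hence fvw: "f v \<noteq> f w" using False by (auto dest: injD)
  show ?thesis
  proof (rule kappa_mono_map[OF fV False fvw])
    fix P assume P: "int_disjoint_paths V E v w P"
    have injm: "inj (map f)" using inj by (simp add: inj_mapI)
    have pth: "is_path V E (f v) (f w) (map f p)" if "is_path V E v w p" for p
    proof -
      have "set (map f p) \<subseteq> V" using that fVV[THEN iffD1] by (auto simp: is_path_def)
      moreover have "distinct (map f p)" using that inj
        by (auto simp: is_path_def distinct_map inj_on_subset[OF inj])
      ultimately show ?thesis using that fE
        by (auto simp: is_path_def hd_map last_map)
    qed
    have int: "interior (map f p) = f ` interior p" for p
      unfolding interior_def map_tl[symmetric] map_butlast[symmetric] by (simp only: set_map)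
    have "int_disjoint_paths V E (f v) (f w) (map f ` P)"
      using P unfolding int_disjoint_paths_def
    proof (intro conjI ballI impI)
      fix p' assume "p' \<in> map f ` P"
      then obtain p where "p \<in> P" "p' = map f p" by auto
      thus "is_path V E (f v) (f w) p'" using P pth by (auto simp: int_disjoint_paths_def)
    next
      fix p' q' assume a: "p' \<in> map f ` P" "q' \<in> map f ` P" "p' \<noteq> q'"
      then obtain p q where "p \<in> P" "q \<in> P" "p' = map f p" "q' = map f q" by auto
      moreover hence "p \<noteq> q" using a by auto
      ultimately have "interior p \<inter> interior q = {}"
        using P unfolding int_disjoint_paths_def by blast
      hence "f ` interior p \<inter> f ` interior q = {}" using image_Int[OF inj, of "interior p" "interior q"] by simp
      thus "interior p' \<inter> interior q' = {}" using int \<open>p' = map f p\<close> \<open>q' = map f q\<close> by simp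
    qed
    moreover have "card (map f ` P) = card P" using card_image[OF inj_on_subset[OF injm subset_UNIV]] .
    ultimately show "\<exists>P'. int_disjoint_paths V E (f v) (f w) P' \<and> card P' = card P" by blast
  qed
qed

lemma kappa_auto:
  assumes fV: "finite V" and inv: "\<And>x. f (f x) = x" and fVV: "\<And>x. x \<in> V \<longleftrightarrow> f x \<in> V"
    and fE: "\<And>x y. E (f x) (f y) = E x y"
  shows "kappa V E (f v) (f w) = kappa V E v w"
proof -
  have "kappa V E v w \<le> kappa V E (f v) (f w)" by (rule kappa_auto_le[where f=f and E=E and V=V, OF fV inv fVV fE])
  moreover have "kappa V E (f v) (f w) \<le> kappa V E (f (f v)) (f (f w))"
    by (rule kappa_auto_le[where f=f and E=E and V=V, OF fV inv fVV fE])
  ultimately show ?thesis using inv by (metis order_antisym)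
qed

definition swp :: "'a \<Rightarrow> 'a \<Rightarrow> 'a \<Rightarrow> 'a" where
  "swp a b x = (if x = a then b else if x = b then a else x)"

lemma swp_E:
  assumes sym: "\<And>x y. E x y = E y x" and irr: "\<And>x. \<not> E x x"
    and tw: "\<And>z. z \<noteq> a \<Longrightarrow> z \<noteq> b \<Longrightarrow> E a z = E b z"
  shows "E (swp a b x) (swp a b y) = E x y"
proof (cases "x = a \<or> x = b")
  case True
  show ?thesis
  proof (cases "y = a \<or> y = b")
    case T2: True
    show ?thesis
    proof (cases "x = y")
      case True thus ?thesis using irr by simp
    next
      case False
      hence "swp a b x = y" "swp a b y = x" using True T2 unfolding swp_def by auto
      thus ?thesis using sym by simp
    qed
  next
    case False
    hence "E a y = E b y" using tw by blast
    thus ?thesis using \<open>x = a \<or> x = b\<close> False unfolding swp_def by auto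
  qed
next
  case False
  show ?thesis
  proof (cases "y = a \<or> y = b")
    case True
    have "E x a = E x b" using tw[of x] False sym by metis
    thus ?thesis using True False unfolding swp_def by auto
  next
    case F2: False
    thus ?thesis using False unfolding swp_def by auto
  qed
qed

lemma kappa_twins:
  assumes fV: "finite V" and ab: "a \<in> V" "b \<in> V"
    and sym: "\<And>x y. E x y = E y x" and irr: "\<And>x. \<not> E x x"
    and tw: "\<And>z. z \<noteq> a \<Longrightarrow> z \<noteq> b \<Longrightarrow> E a z = E b z"
    and w: "w \<noteq> a" "w \<noteq> b"
  shows "kappa V E a w = kappa V E b w"
proof -
  have inv: "\<And>x. swp a b (swp a b x) = x" by (simp add: swp_def)
  have VV: "\<And>x. x \<in> V \<longleftrightarrow> swp a b x \<in> V" using ab by (auto simp: swp_def)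
  have EE: "\<And>x y. E (swp a b x) (swp a b y) = E x y"
    by (rule swp_E[OF sym irr tw]) auto
  have "kappa V E (swp a b a) (swp a b w) = kappa V E a w" by (rule kappa_auto[where f="swp a b" and E=E and V=V, OF fV inv VV EE])
  thus ?thesis using w by (simp add: swp_def)
qed

lemma sep_path:
  assumes p: "is_path V E u w p" and uA: "u \<in> A" and wA: "w \<notin> A" and wS: "w \<notin> S"
    and AS: "A \<inter> S = {}" and vA: "v \<in> A" and vV: "v \<in> V" and vS: "\<And>s. s \<in> S \<Longrightarrow> E v s"
    and nb: "\<And>x y. x \<in> A \<Longrightarrow> y \<in> V \<Longrightarrow> E x y \<Longrightarrow> y \<in> A \<or> y \<in> S"
  defines "k \<equiv> Max {k. k < length p \<and> p ! k \<in> S}"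
  shows "is_path V E v w (v # drop k p) \<and> interior (v # drop k p) \<subseteq> interior p \<and>
         p ! k \<in> interior (v # drop k p)"
proof -
  let ?L = "length p"
  let ?K = "{k. k < length p \<and> p ! k \<in> S}"
  have uw: "u \<noteq> w" using uA wA by auto
  have L2: "?L \<ge> 2" using path_len[OF p uw] .
  have pd: "distinct p" "set p \<subseteq> V" "\<And>i. Suc i < ?L \<Longrightarrow> E (p ! i) (p ! Suc i)"
    "p \<noteq> []" "hd p = u" "last p = w"
    using p by (auto simp: is_path_def)
  have p0: "p ! 0 = u" and pL: "p ! (?L - 1) = w" using path_nth_hd[OF p] path_nth_last[OF p] by auto
  have step: "\<exists>l. j \<le> l \<and> Suc l < ?L \<and> p ! Suc l \<in> S" if jA: "j < ?L" "p ! j \<in> A" for j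
  proof -
    have jj: "j \<le> ?L - 1" using that by simp
    have nA: "\<not> p ! (?L - 1) \<in> A" using pL wA by simp
    obtain l where l: "j \<le> l" "l < ?L - 1" "p ! l \<in> A" "p ! Suc l \<notin> A"
      using discrete_ivt[of "\<lambda>k. p ! k \<in> A", OF jA(2) nA jj] by blast
    have "p ! Suc l \<in> V" using l(2) pd(2) by (auto intro!: subsetD[OF pd(2)] nth_mem)
    hence "p ! Suc l \<in> S" using nb[OF l(3) _ pd(3)] l by auto
    thus ?thesis using l by auto
  qed
  have finK: "finite ?K" by simp
  have neK: "?K \<noteq> {}"
  proof -
    have "0 < ?L" "p ! 0 \<in> A" using L2 p0 uA by auto
    then obtain l where "Suc l < ?L" "p ! Suc l \<in> S" using step[of 0] by blast
    thus ?thesis by blast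
  qed
  have kK: "k \<in> ?K" unfolding k_def using Max_in[OF finK neK] .
  have kmax: "j \<le> k" if "j \<in> ?K" for j unfolding k_def using Max_ge[OF finK that] .
  have k1: "k \<ge> 1"
  proof (rule ccontr)
    assume "\<not> k \<ge> 1" hence "k = 0" by simp
    thus False using kK p0 uA AS by auto
  qed
  have kL: "k < ?L - 1"
  proof (rule ccontr)
    assume "\<not> k < ?L - 1" hence "k = ?L - 1" using kK by auto
    thus False using kK pL wS by auto
  qed
  have after: "p ! j \<notin> A \<and> p ! j \<notin> S" if kj: "k < j" "j < ?L" for j
  proof
    show "p ! j \<notin> S" using kmax[of j] kj by auto
    show "p ! j \<notin> A"
    proof
      assume "p ! j \<in> A"
      then obtain l where "j \<le> l" "Suc l < ?L" "p ! Suc l \<in> S" using step kj(2) by blast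
      thus False using kmax[of "Suc l"] kj by auto
    qed
  qed
  let ?d = "drop k p"
  have dne: "?d \<noteq> []" using kL by simp
  have dlen: "length ?d \<ge> 2" using kL by simp
  have d0: "?d ! 0 = p ! k" using kL by simp
  have vnd: "v \<notin> set ?d"
  proof
    assume "v \<in> set ?d"
    then obtain i where i: "i < length ?d" "?d ! i = v" by (auto simp: in_set_conv_nth)
    show False
    proof (cases "i = 0")
      case True thus False using i d0 kK vA AS by auto
    next
      case False
      have "p ! (k + i) = v" using i by simp
      moreover have "k < k + i" "k + i < ?L" using False i by auto
      ultimately show False using after vA by blast
    qed
  qed
  have path': "is_path V E v w (v # ?d)"
    unfolding is_path_def
  proof (intro conjI allI impI)
    show "v # ?d \<noteq> []" by simp
    show "hd (v # ?d) = v" by simp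
    show "last (v # ?d) = w" using dne pd(6) by (simp add: last_drop)
    show "distinct (v # ?d)" using vnd pd(1) by simp
    show "set (v # ?d) \<subseteq> V" using vV pd(2) set_drop_subset[of k p] by auto
  next
    fix i assume i: "Suc i < length (v # ?d)"
    show "E ((v # ?d) ! i) ((v # ?d) ! Suc i)"
    proof (cases i)
      case 0 thus ?thesis using d0 vS kK by simp
    next
      case (Suc i')
      hence "Suc (k + i') < ?L" using i by auto
      thus ?thesis using pd(3)[of "k + i'"] Suc by simp
    qed
  qed
  have int': "interior (v # ?d) \<subseteq> interior p"
  proof -
    have "interior (v # ?d) = set (drop k (butlast p))" by (simp add: interior_def butlast_drop)
    also have "\<dots> \<subseteq> set (drop 1 (butlast p))" using k1 by (rule set_drop_subset_set_drop)
    also have "\<dots> = interior p" by (simp add: interior_def butlast_tl drop_Suc)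
    finally show ?thesis .
  qed
  have mem: "p ! k \<in> interior (v # ?d)"
  proof (rule mem_interior)
    show "p ! k \<in> set (v # ?d)" using d0 dne by (metis list.set_intros(2) nth_mem length_greater_0_conv)
    show "p ! k \<noteq> hd (v # ?d)" using kK vA AS by auto
    show "p ! k \<noteq> last (v # ?d)" using path' kK wS by (auto simp: is_path_def)
  qed
  show ?thesis using path' int' mem by blast
qed

lemma kappa_sep_le:
  assumes fV: "finite V" and uA: "u \<in> A" and wA: "w \<notin> A" and wS: "w \<notin> S"
    and AS: "A \<inter> S = {}" and vA: "v \<in> A" and vV: "v \<in> V" and vS: "\<And>s. s \<in> S \<Longrightarrow> E v s"
    and nb: "\<And>x y. x \<in> A \<Longrightarrow> y \<in> V \<Longrightarrow> E x y \<Longrightarrow> y \<in> A \<or> y \<in> S"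
  shows "kappa V E u w \<le> kappa V E v w"
proof (rule kappa_mono_map[OF fV])
  show "u \<noteq> w" "v \<noteq> w" using uA vA wA by auto
  fix P assume P: "int_disjoint_paths V E u w P"
  define kk where "kk p = Max {k. k < length p \<and> p ! k \<in> S}" for p :: "'a list"
  define g where "g p = v # drop (kk p) p" for p
  have pp: "is_path V E u w p" if "p \<in> P" for p using P that by (auto simp: int_disjoint_paths_def)
  have G: "is_path V E v w (g p) \<and> interior (g p) \<subseteq> interior p \<and> p ! kk p \<in> interior (g p)"
    if "p \<in> P" for p
    unfolding g_def kk_def by (rule sep_path[OF pp[OF that] uA wA wS AS vA vV vS nb])
  have inj: "inj_on g P"
  proof (rule inj_onI)
    fix p q assume pq: "p \<in> P" "q \<in> P" "g p = g q"
    show "p = q"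
    proof (rule ccontr)
      assume "p \<noteq> q"
      hence "interior p \<inter> interior q = {}" using P pq by (auto simp: int_disjoint_paths_def)
      thus False using G[OF pq(1)] G[OF pq(2)] pq(3) by auto
    qed
  qed
  have "int_disjoint_paths V E v w (g ` P)"
    unfolding int_disjoint_paths_def
  proof (intro conjI ballI impI)
    fix p' assume "p' \<in> g ` P" thus "is_path V E v w p'" using G by auto
  next
    fix p' q' assume a: "p' \<in> g ` P" "q' \<in> g ` P" "p' \<noteq> q'"
    then obtain p q where pq: "p \<in> P" "q \<in> P" "p' = g p" "q' = g q" by auto
    hence "p \<noteq> q" using a by auto
    hence "interior p \<inter> interior q = {}" using P pq by (auto simp: int_disjoint_paths_def)
    thus "interior p' \<inter> interior q' = {}" using G[OF pq(1)] G[OF pq(2)] pq by blast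
  qed
  moreover have "card (g ` P) = card P" using inj by (rule card_image)
  ultimately show "\<exists>P'. int_disjoint_paths V E v w P' \<and> card P' = card P" by blast
qed


lemma GE0_XX: "GE0 n cs (XV i a) (XV k b) \<longleftrightarrow> i = k \<and> i < n \<and>
   (a, b) \<in> {(1,2),(1,3),(1,4),(1,5),(2,3),(2,4),(2,5),(3,4),(3,5)}"
  unfolding GE0_def by auto
lemma GE0_CC: "GE0 n cs (CV j a) (CV k b) \<longleftrightarrow> j < length cs \<and> k < length cs \<and>
   ((j = k \<and> (a, b) \<in> {(3,4),(3,5),(4,5)} \<union> ({1,2,6} \<times> {3,4,5})) \<or>
    (j \<noteq> k \<and> a \<in> {1,2} \<and> b \<in> {1,2}))"
  unfolding GE0_def by auto
lemma GE0_CX: "GE0 n cs (CV j a) (XV i b) \<longleftrightarrow> j < length cs \<and> i < n \<and>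
   (((i, True) \<in> cs ! j \<and> (a, b) \<in> {(1,1),(2,1),(2,2)}) \<or>
    ((i, False) \<in> cs ! j \<and> (a, b) \<in> {(1,1),(1,2),(2,2)}))"
  unfolding GE0_def by auto
lemma GE0_XC: "\<not> GE0 n cs (XV i b) (CV j a)"
  unfolding GE0_def by auto

lemma GE_XX: "GE n cs (XV i a) (XV k b) \<longleftrightarrow>
   (i = k \<and> i < n \<and> (a, b) \<in> {(1,2),(1,3),(1,4),(1,5),(2,3),(2,4),(2,5),(3,4),(3,5)}) \<or>
   (k = i \<and> k < n \<and> (b, a) \<in> {(1,2),(1,3),(1,4),(1,5),(2,3),(2,4),(2,5),(3,4),(3,5)})"
  unfolding GE_def GE0_XX by (rule refl)

lemma GE_CC: "GE n cs (CV j a) (CV k b) \<longleftrightarrow>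
   (j < length cs \<and> k < length cs \<and>
   ((j = k \<and> (a, b) \<in> {(3,4),(3,5),(4,5)} \<union> ({1,2,6} \<times> {3,4,5})) \<or>
    (j \<noteq> k \<and> a \<in> {1,2} \<and> b \<in> {1,2}))) \<or>
   (k < length cs \<and> j < length cs \<and>
   ((k = j \<and> (b, a) \<in> {(3,4),(3,5),(4,5)} \<union> ({1,2,6} \<times> {3,4,5})) \<or>
    (k \<noteq> j \<and> b \<in> {1,2} \<and> a \<in> {1,2})))"
  unfolding GE_def GE0_CC by (rule refl)

lemma GE_CX: "GE n cs (CV j a) (XV i b) \<longleftrightarrow> j < length cs \<and> i < n \<and>
   (((i, True) \<in> cs ! j \<and> (a, b) \<in> {(1,1),(2,1),(2,2)}) \<or>
    ((i, False) \<in> cs ! j \<and> (a, b) \<in> {(1,1),(1,2),(2,2)}))"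
  unfolding GE_def GE0_CX by (simp only: GE0_XC simp_thms)

lemma GE_XC: "GE n cs (XV i b) (CV j a) \<longleftrightarrow> j < length cs \<and> i < n \<and>
   (((i, True) \<in> cs ! j \<and> (a, b) \<in> {(1,1),(2,1),(2,2)}) \<or>
    ((i, False) \<in> cs ! j \<and> (a, b) \<in> {(1,1),(1,2),(2,2)}))"
  unfolding GE_def GE0_CX by (simp only: GE0_XC simp_thms)

lemmas GE_simps = GE_XX GE_CC GE_CX GE_XC

lemma GV_X: "XV i a \<in> GV n cs \<longleftrightarrow> i < n \<and> 1 \<le> a \<and> a \<le> 5"
  unfolding GV_def by auto

lemma GV_C: "CV j a \<in> GV n cs \<longleftrightarrow> j < length cs \<and> 1 \<le> a \<and> a \<le> 6"
  unfolding GV_def by auto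

lemmas GV_simps = GV_X GV_C

lemma GE_sym: "GE n cs x y = GE n cs y x"
  unfolding GE_def by auto

lemma GE_irr: "\<not> GE n cs x x"
  by (cases x) (auto simp: GE_simps)

lemma GE_V: "GE n cs x y \<Longrightarrow> x \<in> GV n cs \<and> y \<in> GV n cs"
  by (cases x; cases y) (auto simp: GE_simps GV_simps)

lemma GV_finite: "finite (GV n cs)"
proof -
  have "GV n cs \<subseteq> (\<lambda>(i,k). XV i k) ` ({..<n} \<times> {1..5}) \<union> (\<lambda>(j,k). CV j k) ` ({..<length cs} \<times> {1..6})"
    unfolding GV_def by auto
  thus ?thesis by (rule finite_subset) auto
qed

lemma N_C6: "GE n cs x (CV k 6) \<longleftrightarrow> k < length cs \<and> x \<in> {CV k 3, CV k 4, CV k 5}"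
  by (cases x) (auto simp: GE_simps)
lemma N_X3: "GE n cs x (XV i 3) \<longleftrightarrow> i < n \<and> x \<in> {XV i 1, XV i 2, XV i 4, XV i 5}"
  by (cases x) (auto simp: GE_simps)
lemma N_X4: "GE n cs x (XV i 4) \<longleftrightarrow> i < n \<and> x \<in> {XV i 1, XV i 2, XV i 3}"
  by (cases x) (auto simp: GE_simps)
lemma N_X5: "GE n cs x (XV i 5) \<longleftrightarrow> i < n \<and> x \<in> {XV i 1, XV i 2, XV i 3}"
  by (cases x) (auto simp: GE_simps)
lemma N_X1: "GE n cs x (XV i 1) \<longleftrightarrow> i < n \<and> (x \<in> {XV i 2, XV i 3, XV i 4, XV i 5} \<or>
   (\<exists>j. x = CV j 1 \<and> j < length cs \<and> ((i, True) \<in> cs ! j \<or> (i, False) \<in> cs ! j)) \<or>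
   (\<exists>j. x = CV j 2 \<and> j < length cs \<and> (i, True) \<in> cs ! j))"
  by (cases x) (auto simp: GE_simps)
lemma N_X2: "GE n cs x (XV i 2) \<longleftrightarrow> i < n \<and> (x \<in> {XV i 1, XV i 3, XV i 4, XV i 5} \<or>
   (\<exists>j. x = CV j 2 \<and> j < length cs \<and> ((i, True) \<in> cs ! j \<or> (i, False) \<in> cs ! j)) \<or>
   (\<exists>j. x = CV j 1 \<and> j < length cs \<and> (i, False) \<in> cs ! j))"
  by (cases x) (auto simp: GE_simps)
lemma N_C3: "GE n cs x (CV k 3) \<longleftrightarrow> k < length cs \<and> x \<in> {CV k 1, CV k 2, CV k 4, CV k 5, CV k 6}"
  by (cases x) (auto simp: GE_simps)
lemma N_C4: "GE n cs x (CV k 4) \<longleftrightarrow> k < length cs \<and> x \<in> {CV k 1, CV k 2, CV k 3, CV k 5, CV k 6}"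
  by (cases x) (auto simp: GE_simps)
lemma N_C5: "GE n cs x (CV k 5) \<longleftrightarrow> k < length cs \<and> x \<in> {CV k 1, CV k 2, CV k 3, CV k 4, CV k 6}"
  by (cases x) (auto simp: GE_simps)

lemma is_path_single: "is_path V E v w [x] \<longleftrightarrow> x = v \<and> x = w \<and> x \<in> V"
  by (auto simp: is_path_def)

lemma is_path_Cons2: "is_path V E v w (v' # x # r) \<longleftrightarrow>
   v' = v \<and> v \<in> V \<and> v \<notin> set (x # r) \<and> E v x \<and> is_path V E x w (x # r)"
proof -
  have A: "(\<forall>i. Suc i < length (v' # x # r) \<longrightarrow> E ((v' # x # r) ! i) ((v' # x # r) ! Suc i)) \<longleftrightarrow>
        E v' x \<and> (\<forall>i. Suc i < length (x # r) \<longrightarrow> E ((x # r) ! i) ((x # r) ! Suc i))"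
    (is "?L \<longleftrightarrow> ?R")
  proof
    assume L: ?L
    have "E v' x" using L[rule_format, of 0] by simp
    moreover have "\<forall>i. Suc i < length (x # r) \<longrightarrow> E ((x # r) ! i) ((x # r) ! Suc i)"
    proof (intro allI impI)
      fix i assume "Suc i < length (x # r)"
      thus "E ((x # r) ! i) ((x # r) ! Suc i)" using L[rule_format, of "Suc i"] by simp
    qed
    ultimately show ?R by blast
  next
    assume R: ?R
    show ?L
    proof (intro allI impI)
      fix i assume i: "Suc i < length (v' # x # r)"
      show "E ((v' # x # r) ! i) ((v' # x # r) ! Suc i)"
      proof (cases i)
        case 0 thus ?thesis using R by simp
      next
        case (Suc i') thus ?thesis using R i by auto
      qed
    qed
  qed
  show ?thesis unfolding is_path_def A by auto
qed

lemma interior_simps: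
  "interior [a, b] = {}" "interior [a, b, c] = {b}" "interior [a, b, c, d] = {b, c}"
  "interior [a, b, c, d, e] = {b, c, d}"
  by (auto simp: interior_def)

lemma fan_idp:
  assumes T: "\<forall>c\<in>T. is_path V E v w [v, c, w]" and Q: "\<forall>q\<in>Q. is_path V E v w q"
    and Qd: "\<forall>q\<in>Q. \<forall>q'\<in>Q. q \<noteq> q' \<longrightarrow> interior q \<inter> interior q' = {}"
    and QT: "\<forall>q\<in>Q. interior q \<inter> T = {}"
  shows "int_disjoint_paths V E v w ((\<lambda>c. [v, c, w]) ` T \<union> Q)"
  unfolding int_disjoint_paths_def
proof (intro conjI ballI impI)
  fix p assume "p \<in> (\<lambda>c. [v, c, w]) ` T \<union> Q"
  thus "is_path V E v w p" using T Q by auto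
next
  fix p q assume p: "p \<in> (\<lambda>c. [v, c, w]) ` T \<union> Q" and q: "q \<in> (\<lambda>c. [v, c, w]) ` T \<union> Q"
    and pq: "p \<noteq> q"
  show "interior p \<inter> interior q = {}"
    using p q pq Qd QT by (auto simp: interior_simps; blast)
qed

lemma fan_card:
  assumes fT: "finite T" and fQ: "finite Q" and QT: "\<forall>q\<in>Q. interior q \<inter> T = {}"
  shows "card ((\<lambda>c. [v, c, w]) ` T \<union> Q) = card T + card Q"
proof -
  have d: "(\<lambda>c. [v, c, w]) ` T \<inter> Q = {}" using QT by (auto simp: interior_simps)
  have i: "inj_on (\<lambda>c. [v, c, w]) T" by (auto intro: inj_onI)
  show ?thesis using card_Un_disjoint[OF _ fQ d] fT card_image[OF i] by simp
qed

lemma kappa_exact: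
  assumes fV: "finite V" and vw: "v \<noteq> w" and fS: "finite S" and S: "v \<notin> S" "w \<notin> S"
    and B: "v \<notin> B" "w \<in> B"
    and cut: "\<And>x y. x \<in> V \<Longrightarrow> y \<in> V \<Longrightarrow> E x y \<Longrightarrow> x \<notin> B \<Longrightarrow> y \<in> B \<Longrightarrow>
                x \<in> S \<or> y \<in> S \<or> (x = v \<and> y = w)"
    and P0: "int_disjoint_paths V E v w P0"
    and c: "card P0 = card S + (if E v w then 1 else 0)"
  shows "kappa V E v w = enat (card P0)"
  using kappa_cut[OF fV vw fS S B cut] kappa_ge[OF fV vw P0] c by (simp add: order_antisym)


lemma A_hub: "j \<noteq> k \<Longrightarrow> j < length cs \<Longrightarrow> k < length cs \<Longrightarrow> b \<in> {1,2} \<Longrightarrow> b' \<in> {1,2} \<Longrightarrow>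
  GE n cs (CV j b) (CV k b')"
  by (simp add: GE_CC)

lemma A_C: "k < length cs \<Longrightarrow> c \<in> {1,2,6} \<Longrightarrow> a \<in> {3,4,5} \<Longrightarrow> GE n cs (CV k c) (CV k a)"
  by (simp add: GE_CC) (elim disjE; simp)

lemma A_CC: "k < length cs \<Longrightarrow> a \<in> {3,4,5} \<Longrightarrow> a' \<in> {3,4,5} \<Longrightarrow> a \<noteq> a' \<Longrightarrow> GE n cs (CV k a) (CV k a')"
  by (simp add: GE_CC) (elim disjE; simp)

lemma A_X: "i < n \<Longrightarrow> c \<in> {1,2} \<Longrightarrow> a \<in> {3,4,5} \<Longrightarrow> GE n cs (XV i c) (XV i a)"
  by (simp add: GE_XX) (elim disjE; simp)

lemma A_X12: "i < n \<Longrightarrow> GE n cs (XV i 1) (XV i 2)"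
  by (simp add: GE_XX)

lemma A_X3: "i < n \<Longrightarrow> GE n cs (XV i 3) (XV i 4) \<and> GE n cs (XV i 3) (XV i 5)"
  by (simp add: GE_XX)






definition cnb :: "nat \<Rightarrow> clause list \<Rightarrow> gvert \<Rightarrow> gvert set" where
  "cnb n cs w = {x. (\<exists>k c. x = CV k c) \<and> GE n cs x w}"

lemma cnb_finite: "finite (cnb n cs w)"
proof -
  have "cnb n cs w \<subseteq> GV n cs" using GE_V by (auto simp: cnb_def)
  thus ?thesis using GV_finite finite_subset by blast
qed

lemma cnb_X1: "CV k c \<in> cnb n cs (XV i 1) \<longleftrightarrow> i < n \<and> k < length cs \<and>
   ((c = 1 \<and> ((i, True) \<in> cs ! k \<or> (i, False) \<in> cs ! k)) \<or> (c = 2 \<and> (i, True) \<in> cs ! k))"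
  unfolding cnb_def by (auto simp: GE_CX)

lemma cnb_X2: "CV k c \<in> cnb n cs (XV i 2) \<longleftrightarrow> i < n \<and> k < length cs \<and>
   ((c = 2 \<and> ((i, True) \<in> cs ! k \<or> (i, False) \<in> cs ! k)) \<or> (c = 1 \<and> (i, False) \<in> cs ! k))"
  unfolding cnb_def by (auto simp: GE_CX)

lemma cnb_XV: "XV i' c \<notin> cnb n cs w"
  by (simp add: cnb_def)

lemma cnb_CV: "x \<in> cnb n cs w \<Longrightarrow> \<exists>k c. x = CV k c"
  by (simp add: cnb_def)

lemma cnb_adj: "x \<in> cnb n cs w \<Longrightarrow> GE n cs x w"
  by (simp add: cnb_def)

lemma cnb_I: "GE n cs (CV k c) w \<Longrightarrow> CV k c \<in> cnb n cs w"
  by (simp add: cnb_def)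





lemma sum_all_eq:
  fixes f :: "'i \<Rightarrow> nat"
  assumes fin: "finite I" and ge: "\<forall>i\<in>I. c \<le> f i" and s: "sum f I \<le> c * card I"
  shows "\<forall>i\<in>I. f i = c"
proof (rule ccontr)
  assume "\<not> (\<forall>i\<in>I. f i = c)"
  then obtain i0 where "i0 \<in> I" "f i0 \<noteq> c" by blast
  hence "\<exists>i\<in>I. c < f i" using ge by force
  hence "sum (\<lambda>_. c) I < sum f I" using sum_strict_mono_ex1[OF fin, of "\<lambda>_. c" f] ge by blast
  thus False using s by (simp add: mult.commute)
qed

lemma res_sep:
  assumes "resolving V E W" "v1 \<in> V" "v2 \<in> V" "v1 \<noteq> v2"
  shows "\<exists>w\<in>W. kappa V E v1 w \<noteq> kappa V E v2 w"
  using assms unfolding resolving_def by blast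

definition Xs :: "nat \<Rightarrow> gvert set" where
  "Xs i = {XV i 1, XV i 2, XV i 3, XV i 4, XV i 5}"

definition Cs :: "nat \<Rightarrow> gvert set" where
  "Cs j = {CV j 1, CV j 2, CV j 3, CV j 4, CV j 5, CV j 6}"

lemma GV_decomp: "GV n cs = (\<Union>i\<in>{..<n}. Xs i) \<union> (\<Union>j\<in>{..<length cs}. Cs j)"
proof (rule set_eqI)
  fix x show "x \<in> GV n cs \<longleftrightarrow> x \<in> (\<Union>i\<in>{..<n}. Xs i) \<union> (\<Union>j\<in>{..<length cs}. Cs j)"
  proof (cases x)
    case (XV i a)
    have "1 \<le> a \<and> a \<le> 5 \<longleftrightarrow> a \<in> {1,2,3,4,5}" by auto
    thus ?thesis using XV by (auto simp: GV_simps Xs_def Cs_def)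
  next
    case (CV j a)
    have "1 \<le> a \<and> a \<le> 6 \<longleftrightarrow> a \<in> {1,2,3,4,5,6}" by auto
    thus ?thesis using CV by (auto simp: GV_simps Xs_def Cs_def)
  qed
qed

lemma Xs_disj: "i \<noteq> i' \<Longrightarrow> Xs i \<inter> Xs i' = {}" by (auto simp: Xs_def)
lemma Cs_disj: "j \<noteq> j' \<Longrightarrow> Cs j \<inter> Cs j' = {}" by (auto simp: Cs_def)
lemma XC_disj: "(\<Union>i\<in>I. Xs i) \<inter> (\<Union>j\<in>J. Cs j) = {}" by (auto simp: Xs_def Cs_def)

lemma card_decomp:
  assumes WV: "W \<subseteq> GV n cs" and fW: "finite W"
  shows "card W = (\<Sum>i<n. card (W \<inter> Xs i)) + (\<Sum>j<length cs. card (W \<inter> Cs j))"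
proof -
  let ?X = "\<Union>i\<in>{..<n}. W \<inter> Xs i" and ?C = "\<Union>j\<in>{..<length cs}. W \<inter> Cs j"
  have W: "W = ?X \<union> ?C" using WV GV_decomp[of n cs] by auto
  have d: "?X \<inter> ?C = {}" using XC_disj[of "{..<n}" "{..<length cs}"] by auto
  have fX: "finite ?X" "finite ?C" using fW by auto
  have "card W = card ?X + card ?C" using card_Un_disjoint[OF fX d] W by simp
  moreover have "card ?X = (\<Sum>i<n. card (W \<inter> Xs i))"
    by (rule card_UN_disjoint) (use fW Xs_disj in auto)
  moreover have "card ?C = (\<Sum>j<length cs. card (W \<inter> Cs j))"
    by (rule card_UN_disjoint) (use fW Cs_disj in auto)
  ultimately show ?thesis by simp
qed


context
  fixes n :: nat and cs :: "clause list"
  assumes inst: "sat3_instance n cs"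
begin

lemma cons: "j < length cs \<Longrightarrow> (i, True) \<in> cs ! j \<Longrightarrow> (i, False) \<notin> cs ! j"
  using inst unfolding sat3_instance_def by (fastforce dest: nth_mem)

lemma lit_lt: "j < length cs \<Longrightarrow> (i, b) \<in> cs ! j \<Longrightarrow> i < n"
  using inst unfolding sat3_instance_def by (fastforce dest: nth_mem)

lemma clause_ne: "j < length cs \<Longrightarrow> \<exists>i b. (i, b) \<in> cs ! j"
  using inst unfolding sat3_instance_def by (fastforce dest: nth_mem)

lemma var_occ: "i < n \<Longrightarrow> \<exists>k b. k < length cs \<and> (i, b) \<in> cs ! k"
  using inst unfolding sat3_instance_def by (fastforce simp: in_set_conv_nth)

lemma K1:
  assumes jk: "j \<noteq> k" "j < length cs" "k < length cs" and b: "b \<in> {1,2}" and a: "a \<in> {3,4,5}"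
  shows "kappa (GV n cs) (GE n cs) (CV j b) (CV k a) = 2"
proof -
  let ?v = "CV j b" and ?w = "CV k a"
  let ?T = "{CV k 1, CV k 2}"
  let ?B = "{CV k 3, CV k 4, CV k 5, CV k 6}"
  let ?P = "(\<lambda>c. [?v, c, ?w]) ` ?T \<union> {}"
  have ne: "a \<noteq> 1" "a \<noteq> 2" "a \<noteq> 6" "b \<noteq> 3" "b \<noteq> 4" "b \<noteq> 5" "b \<noteq> 6" using a b by auto
  have inV: "?v \<in> GV n cs" "?w \<in> GV n cs" using a b jk by (auto simp: GV_simps)
  have "kappa (GV n cs) (GE n cs) ?v ?w = enat (card ?P)"
  proof (rule kappa_exact[OF GV_finite, where S = "?T" and B = ?B])
    show "?v \<noteq> ?w" using jk by simp
    show "finite ?T" by simp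
    show "?v \<notin> ?T" "?w \<notin> ?T" using jk ne by auto
    show "?v \<notin> ?B" "?w \<in> ?B" using jk a by auto
  next
    fix x y assume xy: "GE n cs x y" "x \<notin> ?B" and "y \<in> ?B"
    hence "y = CV k 3 \<or> y = CV k 4 \<or> y = CV k 5 \<or> y = CV k 6" by simp
    thus "x \<in> ?T \<or> y \<in> ?T \<or> (x = ?v \<and> y = ?w)"
      by (elim disjE) (use xy in \<open>auto simp: N_C3 N_C4 N_C5 N_C6\<close>)
  next
    have p1: "is_path (GV n cs) (GE n cs) ?v ?w [?v, CV k 1, ?w]"
      using jk a b ne inV by (simp add: is_path_Cons2 is_path_single A_hub A_C GV_simps)
    have p2: "is_path (GV n cs) (GE n cs) ?v ?w [?v, CV k 2, ?w]"
      using jk a b ne inV by (simp add: is_path_Cons2 is_path_single A_hub A_C GV_simps)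
    show "int_disjoint_paths (GV n cs) (GE n cs) ?v ?w ?P"
      by (rule fan_idp) (use p1 p2 in auto)
    have "\<not> GE n cs ?v ?w" using jk ne by (simp add: GE_simps)
    thus "card ?P = card ?T + (if GE n cs ?v ?w then 1 else 0)"
      by (subst fan_card) auto
  qed
  thus ?thesis by (simp add: numeral_eq_enat)
qed

lemma K7a:
  assumes i: "i < n"
  shows "kappa (GV n cs) (GE n cs) (XV i 3) (XV i 4) = 3"
proof -
  let ?v = "XV i 3" and ?w = "XV i 4"
  let ?T = "{XV i 1, XV i 2}"
  let ?P = "(\<lambda>c. [?v, c, ?w]) ` ?T \<union> {[?v, ?w]}"
  have "kappa (GV n cs) (GE n cs) ?v ?w = enat (card ?P)"
  proof (rule kappa_exact[OF GV_finite, where S = "?T" and B = "{?w}"])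
    fix x y assume xy: "GE n cs x y" "x \<notin> {?w}" and "y \<in> {?w}"
    thus "x \<in> ?T \<or> y \<in> ?T \<or> (x = ?v \<and> y = ?w)" by (auto simp: N_X4)
  next
    show "int_disjoint_paths (GV n cs) (GE n cs) ?v ?w ?P"
      using i by (intro fan_idp) (auto simp: is_path_Cons2 is_path_single GE_simps GV_simps interior_simps)
    show "card ?P = card ?T + (if GE n cs ?v ?w then 1 else 0)"
      using i by (subst fan_card) (auto simp: interior_simps GE_simps)
  qed auto
  thus ?thesis by (simp add: numeral_eq_enat)
qed

lemma K7b:
  assumes i: "i < n"
  shows "kappa (GV n cs) (GE n cs) (XV i 5) (XV i 4) = 3"
proof -
  let ?v = "XV i 5" and ?w = "XV i 4"
  let ?T = "{XV i 1, XV i 2, XV i 3}"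
  let ?P = "(\<lambda>c. [?v, c, ?w]) ` ?T \<union> {}"
  have "kappa (GV n cs) (GE n cs) ?v ?w = enat (card ?P)"
  proof (rule kappa_exact[OF GV_finite, where S = "?T" and B = "{?w}"])
    fix x y assume xy: "GE n cs x y" "x \<notin> {?w}" and "y \<in> {?w}"
    thus "x \<in> ?T \<or> y \<in> ?T \<or> (x = ?v \<and> y = ?w)" by (auto simp: N_X4)
  next
    show "int_disjoint_paths (GV n cs) (GE n cs) ?v ?w ?P"
      using i by (intro fan_idp) (auto simp: is_path_Cons2 is_path_single GE_simps GV_simps interior_simps)
    show "card ?P = card ?T + (if GE n cs ?v ?w then 1 else 0)"
      using i by (subst fan_card) (auto simp: interior_simps GE_simps)
  qed auto
  thus ?thesis by (simp add: numeral_eq_enat)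
qed

lemma K7c:
  assumes i: "i < n"
  shows "kappa (GV n cs) (GE n cs) (XV i 3) (XV i 5) = 3"
proof -
  let ?v = "XV i 3" and ?w = "XV i 5"
  let ?T = "{XV i 1, XV i 2}"
  let ?P = "(\<lambda>c. [?v, c, ?w]) ` ?T \<union> {[?v, ?w]}"
  have "kappa (GV n cs) (GE n cs) ?v ?w = enat (card ?P)"
  proof (rule kappa_exact[OF GV_finite, where S = "?T" and B = "{?w}"])
    fix x y assume xy: "GE n cs x y" "x \<notin> {?w}" and "y \<in> {?w}"
    thus "x \<in> ?T \<or> y \<in> ?T \<or> (x = ?v \<and> y = ?w)" by (auto simp: N_X5)
  next
    show "int_disjoint_paths (GV n cs) (GE n cs) ?v ?w ?P"
      using i by (intro fan_idp) (auto simp: is_path_Cons2 is_path_single GE_simps GV_simps interior_simps)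
    show "card ?P = card ?T + (if GE n cs ?v ?w then 1 else 0)"
      using i by (subst fan_card) (auto simp: interior_simps GE_simps)
  qed auto
  thus ?thesis by (simp add: numeral_eq_enat)
qed

lemma K7d:
  assumes i: "i < n"
  shows "kappa (GV n cs) (GE n cs) (XV i 4) (XV i 5) = 3"
proof -
  let ?v = "XV i 4" and ?w = "XV i 5"
  let ?T = "{XV i 1, XV i 2, XV i 3}"
  let ?P = "(\<lambda>c. [?v, c, ?w]) ` ?T \<union> {}"
  have "kappa (GV n cs) (GE n cs) ?v ?w = enat (card ?P)"
  proof (rule kappa_exact[OF GV_finite, where S = "?T" and B = "{?w}"])
    fix x y assume xy: "GE n cs x y" "x \<notin> {?w}" and "y \<in> {?w}"
    thus "x \<in> ?T \<or> y \<in> ?T \<or> (x = ?v \<and> y = ?w)" by (auto simp: N_X5)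
  next
    show "int_disjoint_paths (GV n cs) (GE n cs) ?v ?w ?P"
      using i by (intro fan_idp) (auto simp: is_path_Cons2 is_path_single GE_simps GV_simps interior_simps)
    show "card ?P = card ?T + (if GE n cs ?v ?w then 1 else 0)"
      using i by (subst fan_card) (auto simp: interior_simps GE_simps)
  qed auto
  thus ?thesis by (simp add: numeral_eq_enat)
qed


lemma K9x:
  assumes i: "i < n" and w: "w \<noteq> XV i 4" "w \<noteq> XV i 5"
  shows "kappa (GV n cs) (GE n cs) (XV i 4) w = kappa (GV n cs) (GE n cs) (XV i 5) w"
proof (rule kappa_twins[OF GV_finite _ _ GE_sym GE_irr _ w])
  show "XV i 4 \<in> GV n cs" "XV i 5 \<in> GV n cs" using i by (auto simp: GV_simps)
  fix z assume "z \<noteq> XV i 4" "z \<noteq> XV i 5"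
  show "GE n cs (XV i 4) z = GE n cs (XV i 5) z"
    by (simp add: GE_sym[of n cs "XV i 4"] GE_sym[of n cs "XV i 5"] N_X4 N_X5)
qed

lemma K9c:
  assumes j: "j < length cs" and a: "a \<in> {3,4,5}" "a' \<in> {3,4,5}" and w: "w \<noteq> CV j a" "w \<noteq> CV j a'"
  shows "kappa (GV n cs) (GE n cs) (CV j a) w = kappa (GV n cs) (GE n cs) (CV j a') w"
proof (rule kappa_twins[OF GV_finite _ _ GE_sym GE_irr _ w])
  show "CV j a \<in> GV n cs" "CV j a' \<in> GV n cs" using j a by (auto simp: GV_simps)
  fix z assume z: "z \<noteq> CV j a" "z \<noteq> CV j a'"
  have "GE n cs (CV j a) z = GE n cs z (CV j a)" "GE n cs (CV j a') z = GE n cs z (CV j a')"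
    by (rule GE_sym)+
  moreover have "GE n cs z (CV j c) = (j < length cs \<and> z \<in> {CV j 1, CV j 2, CV j 3, CV j 4, CV j 5, CV j 6} - {CV j c})"
    if "c \<in> {3,4,5}" for c
    using that by (elim insertE emptyE) (auto simp: N_C3 N_C4 N_C5)
  ultimately show "GE n cs (CV j a) z = GE n cs (CV j a') z" using z a by simp
qed

lemma K8:
  assumes i: "i < n" and u: "u \<in> {XV i 3, XV i 4, XV i 5}" and v: "v \<in> {XV i 3, XV i 4, XV i 5}"
    and w: "w \<notin> {XV i 1, XV i 2, XV i 3, XV i 4, XV i 5}"
  shows "kappa (GV n cs) (GE n cs) u w \<le> kappa (GV n cs) (GE n cs) v w"
proof (rule kappa_sep_le[OF GV_finite u, where S = "{XV i 1, XV i 2}"])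
  show "w \<notin> {XV i 3, XV i 4, XV i 5}" "w \<notin> {XV i 1, XV i 2}" using w by auto
  show "{XV i 3, XV i 4, XV i 5} \<inter> {XV i 1, XV i 2} = {}" by auto
  show "v \<in> {XV i 3, XV i 4, XV i 5}" by (rule v)
  show "v \<in> GV n cs" using v i by (auto simp: GV_simps)
  fix s assume "s \<in> {XV i 1, XV i 2}"
  thus "GE n cs v s" using v i by (auto simp: GE_simps)
next
  fix x y assume "x \<in> {XV i 3, XV i 4, XV i 5}" "GE n cs x y"
  thus "y \<in> {XV i 3, XV i 4, XV i 5} \<or> y \<in> {XV i 1, XV i 2}"
    by (auto simp: GE_sym[of n cs x] N_X3 N_X4 N_X5)
qed



lemma N_C345: "c \<in> {3,4,5} \<Longrightarrow>
  GE n cs z (CV j c) = (j < length cs \<and> z \<in> {CV j 1, CV j 2, CV j 3, CV j 4, CV j 5, CV j 6} - {CV j c})"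
  by (elim insertE emptyE) (auto simp: N_C3 N_C4 N_C5)

lemma A_CXp: "j < length cs \<Longrightarrow> (l, True) \<in> cs ! j \<Longrightarrow> b \<in> {1,2} \<Longrightarrow> GE n cs (CV j b) (XV l 1)"
  using lit_lt[of j l True] by (auto simp: GE_CX)

lemma A_CXn: "j < length cs \<Longrightarrow> (l, False) \<in> cs ! j \<Longrightarrow> b \<in> {1,2} \<Longrightarrow> GE n cs (CV j b) (XV l 2)"
  using lit_lt[of j l False] by (auto simp: GE_CX)

lemma A_CXd: "j < length cs \<Longrightarrow> (l, s) \<in> cs ! j \<Longrightarrow> b \<in> {1,2} \<Longrightarrow> GE n cs (CV j b) (XV l b)"
  using lit_lt[of j l s] by (cases s) (auto simp: GE_CX)

lemma K2:
  assumes j: "j < length cs" and b: "b \<in> {1,2}" "b' \<in> {1,2}" "b \<noteq> b'"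
    and a: "a \<in> {3,4,5}" "a' \<in> {3,4,5}" "a'' \<in> {3,4,5}" and aa: "a \<noteq> a'" "a \<noteq> a''" "a' \<noteq> a''"
  shows "kappa (GV n cs) (GE n cs) (CV j b) (CV j a) = 4"
proof -
  let ?v = "CV j b" and ?w = "CV j a"
  have covb: "c = b \<or> c = b'" if "c \<in> {1,2}" for c using that b by auto
  have cova: "c = a \<or> c = a' \<or> c = a''" if "c \<in> {3,4,5}" for c using that a aa by auto
  obtain l s where ls: "(l, s) \<in> cs ! j" using clause_ne[OF j] by blast
  have l: "l < n" using lit_lt[OF j ls] .
  define z where "z = (if s then XV l 1 else XV l 2)"
  have zadj: "GE n cs (CV j b) z" "GE n cs z (CV j b')"
  proof -
    show "GE n cs (CV j b) z"
      using A_CXp[OF j _ b(1)] A_CXn[OF j _ b(1)] ls by (cases s) (auto simp: z_def)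
    have "GE n cs (CV j b') z"
      using A_CXp[OF j _ b(2)] A_CXn[OF j _ b(2)] ls by (cases s) (auto simp: z_def)
    thus "GE n cs z (CV j b')" by (simp add: GE_sym)
  qed
  have zV: "z \<in> GV n cs" using l by (simp add: z_def GV_simps)
  have nz: "z \<noteq> CV j c" for c by (simp add: z_def)
  have ne: "a \<noteq> b" "a \<noteq> b'" "a' \<noteq> b" "a' \<noteq> b'" "a'' \<noteq> b" "a'' \<noteq> b'" "a \<noteq> 6" "a' \<noteq> 6" "a'' \<noteq> 6"
    "b \<noteq> 6" "b' \<noteq> 6"
    using a b by auto
  let ?T = "{CV j a', CV j a''}"
  let ?S = "{CV j b', CV j a', CV j a''}"
  let ?B = "{CV j a, CV j 6}"
  let ?Q = "{[?v, ?w], [?v, z, CV j b', ?w]}"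
  let ?P = "(\<lambda>c. [?v, c, ?w]) ` ?T \<union> ?Q"
  have inV: "?v \<in> GV n cs" "?w \<in> GV n cs" "CV j b' \<in> GV n cs" "CV j a' \<in> GV n cs" "CV j a'' \<in> GV n cs"
    using a b j by (auto simp: GV_simps)
  have E1: "GE n cs ?v ?w" "GE n cs ?v (CV j a')" "GE n cs ?v (CV j a'')"
    "GE n cs (CV j a') ?w" "GE n cs (CV j a'') ?w" "GE n cs (CV j b') ?w"
  proof -
    have b6: "b \<in> {1,2,6}" "b' \<in> {1,2,6}" using b by auto
    show "GE n cs ?v ?w" "GE n cs ?v (CV j a')" "GE n cs ?v (CV j a'')" "GE n cs (CV j b') ?w"
      using A_C[OF j b6(1) a(1)] A_C[OF j b6(1) a(2)] A_C[OF j b6(1) a(3)] A_C[OF j b6(2) a(1)] by auto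
    show "GE n cs (CV j a') ?w" "GE n cs (CV j a'') ?w"
      using A_CC[OF j a(2) a(1)] A_CC[OF j a(3) a(1)] aa by auto
  qed
  have cT: "card ?T = 2" using aa by simp
  have cQ: "card ?Q = 2" by simp
  have QT: "\<forall>q\<in>?Q. interior q \<inter> ?T = {}" using nz ne by (auto simp: interior_simps)
  have cP: "card ?P = 4" using fan_card[of ?T ?Q, OF _ _ QT] cT cQ by simp
  have "kappa (GV n cs) (GE n cs) ?v ?w = enat (card ?P)"
  proof (rule kappa_exact[OF GV_finite, where S = ?S and B = ?B])
    show "?v \<noteq> ?w" "?v \<notin> ?S" "?w \<notin> ?S" "?v \<notin> ?B" "?w \<in> ?B" using ne aa b by auto
  next
    fix x y assume xy: "GE n cs x y" "x \<notin> ?B" and "y \<in> ?B"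
    hence "y = CV j a \<or> y = CV j 6" by simp
    thus "x \<in> ?S \<or> y \<in> ?S \<or> (x = ?v \<and> y = ?w)"
    proof
      assume y: "y = CV j a"
      hence "x \<in> {CV j 1, CV j 2, CV j 3, CV j 4, CV j 5, CV j 6} - {CV j a}"
        using xy N_C345[OF a(1)] by auto
      then obtain c where c: "x = CV j c" "c \<in> {1,2,3,4,5,6}" "c \<noteq> a" by auto
      have "c \<noteq> 6" using c xy by auto
      hence "c \<in> {1,2} \<or> c \<in> {3,4,5}" using c by auto
      thus ?thesis
      proof
        assume "c \<in> {1,2}" thus ?thesis using covb[of c] c y by auto
      next
        assume "c \<in> {3,4,5}" thus ?thesis using cova[of c] c by auto
      qed
    next
      assume y: "y = CV j 6"
      hence "x \<in> {CV j 3, CV j 4, CV j 5}" using xy N_C6 by auto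
      then obtain c where c: "x = CV j c" "c \<in> {3,4,5}" by auto
      thus ?thesis using cova[of c] xy by auto
    qed
  next
    show "int_disjoint_paths (GV n cs) (GE n cs) ?v ?w ?P"
    proof (rule fan_idp)
      show "\<forall>c\<in>?T. is_path (GV n cs) (GE n cs) ?v ?w [?v, c, ?w]"
        using inV E1 ne aa by (auto simp: is_path_Cons2 is_path_single)
      show "\<forall>q\<in>?Q. is_path (GV n cs) (GE n cs) ?v ?w q"
        using inV E1 ne b zadj zV nz by (auto simp: is_path_Cons2 is_path_single)
      show "\<forall>q\<in>?Q. \<forall>q'\<in>?Q. q \<noteq> q' \<longrightarrow> interior q \<inter> interior q' = {}"
        by (auto simp: interior_simps)
      show "\<forall>q\<in>?Q. interior q \<inter> ?T = {}" by (rule QT)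
    qed
    have "card ?S = 3" using ne aa by simp
    thus "card ?P = card ?S + (if GE n cs ?v ?w then 1 else 0)" using cP E1 by simp
  qed simp
  thus ?thesis using cP by (simp add: numeral_eq_enat)
qed

lemma K3:
  assumes j: "j < length cs" and i: "i < n" and bb: "{b, b'} = {1,2}" "b \<noteq> b'" and a: "a \<in> {3,4,5}"
  shows "kappa (GV n cs) (GE n cs) (CV j b) (XV i a) = 2"
proof -
  let ?v = "CV j b" and ?w = "XV i a"
  let ?S = "{XV i 1, XV i 2}"
  let ?B = "{XV i 3, XV i 4, XV i 5}"
  have b: "b \<in> {1,2}" "b' \<in> {1,2}" using bb by auto
  have ne: "a \<noteq> 1" "a \<noteq> 2" "b \<noteq> 3" "b' \<noteq> 3" using a b by auto
  have inV: "?v \<in> GV n cs" "?w \<in> GV n cs" "CV j 3 \<in> GV n cs" "CV j b' \<in> GV n cs"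
    "XV i 1 \<in> GV n cs" "XV i 2 \<in> GV n cs"
    using a b j i by (auto simp: GV_simps)
  have Xw: "GE n cs (XV i 1) ?w" "GE n cs (XV i 2) ?w" using A_X[OF i _ a] by auto
  have nvw: "\<not> GE n cs ?v ?w" using ne by (simp add: GE_CX)
  obtain P where P: "int_disjoint_paths (GV n cs) (GE n cs) ?v ?w P" "card P = 2"
  proof (cases "\<exists>s. (i, s) \<in> cs ! j")
    case True
    then obtain s where s: "(i, s) \<in> cs ! j" by blast
    let ?Q = "{[?v, XV i b, ?w], [?v, CV j 3, CV j b', XV i b', ?w]}"
    have e: "GE n cs ?v (XV i b)" "GE n cs (CV j b') (XV i b')" using A_CXd[OF j s] b by auto
    have e2: "GE n cs ?v (CV j 3)" "GE n cs (CV j 3) (CV j b')" using A_C[OF j _, of b 3] A_C[OF j _, of b' 3] b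
      by (auto simp: GE_sym[of n cs "CV j 3"])
    have e3: "GE n cs (XV i b) ?w" "GE n cs (XV i b') ?w" using A_X[OF i _ a] b by auto
    have "int_disjoint_paths (GV n cs) (GE n cs) ?v ?w ((\<lambda>c. [?v, c, ?w]) ` {} \<union> ?Q)"
    proof (rule fan_idp)
      show "\<forall>q\<in>?Q. is_path (GV n cs) (GE n cs) ?v ?w q"
        using inV e e2 e3 ne bb b by (auto simp: is_path_Cons2 is_path_single)
      show "\<forall>q\<in>?Q. \<forall>q'\<in>?Q. q \<noteq> q' \<longrightarrow> interior q \<inter> interior q' = {}"
        using bb by (auto simp: interior_simps)
    qed auto
    moreover have "card ((\<lambda>c. [?v, c, ?w]) ` {} \<union> ?Q) = 2" by simp
    ultimately show ?thesis using that by blast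
  next
    case False
    obtain k s where ks: "k < length cs" "(i, s) \<in> cs ! k" using var_occ[OF i] by blast
    have kj: "k \<noteq> j" using False ks by blast
    let ?Q = "{[?v, CV k 1, XV i 1, ?w], [?v, CV k 2, XV i 2, ?w]}"
    have e: "GE n cs (CV k 1) (XV i 1)" "GE n cs (CV k 2) (XV i 2)" using A_CXd[OF ks(1,2)] by auto
    have e2: "GE n cs ?v (CV k 1)" "GE n cs ?v (CV k 2)" using A_hub[OF kj[symmetric] j ks(1) b(1)] by auto
    have inV2: "CV k 1 \<in> GV n cs" "CV k 2 \<in> GV n cs" using ks by (auto simp: GV_simps)
    have "int_disjoint_paths (GV n cs) (GE n cs) ?v ?w ((\<lambda>c. [?v, c, ?w]) ` {} \<union> ?Q)"
    proof (rule fan_idp)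
      show "\<forall>q\<in>?Q. is_path (GV n cs) (GE n cs) ?v ?w q"
        using inV inV2 e e2 Xw ne kj by (auto simp: is_path_Cons2 is_path_single)
      show "\<forall>q\<in>?Q. \<forall>q'\<in>?Q. q \<noteq> q' \<longrightarrow> interior q \<inter> interior q' = {}"
        by (auto simp: interior_simps)
    qed auto
    moreover have "card ((\<lambda>c. [?v, c, ?w]) ` {} \<union> ?Q) = 2" by simp
    ultimately show ?thesis using that by blast
  qed
  have "kappa (GV n cs) (GE n cs) ?v ?w = enat (card P)"
  proof (rule kappa_exact[OF GV_finite, where S = ?S and B = ?B])
    show "?v \<noteq> ?w" "?v \<notin> ?S" "?w \<notin> ?S" "?v \<notin> ?B" "?w \<in> ?B" using a ne by auto
  next
    fix x y assume xy: "GE n cs x y" "x \<notin> ?B" and "y \<in> ?B"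
    hence "y = XV i 3 \<or> y = XV i 4 \<or> y = XV i 5" by simp
    thus "x \<in> ?S \<or> y \<in> ?S \<or> (x = ?v \<and> y = ?w)"
      by (elim disjE) (use xy in \<open>auto simp: N_X3 N_X4 N_X5\<close>)
  next
    show "int_disjoint_paths (GV n cs) (GE n cs) ?v ?w P" by (rule P(1))
    show "card P = card ?S + (if GE n cs ?v ?w then 1 else 0)" using P(2) nvw by simp
  qed simp
  thus ?thesis using P(2) by (simp add: numeral_eq_enat)
qed


lemma K4a:
  assumes j: "j < length cs" and i: "i < n" and nin: "(i, True) \<notin> cs ! j" "(i, False) \<notin> cs ! j"
    and v: "v \<in> {CV j 1, CV j 2}"
  shows "kappa (GV n cs) (GE n cs) v (XV i 1) =
         enat (card (cnb n cs (XV i 1)) + (if \<exists>k < length cs. (i, False) \<in> cs ! k then 1 else 0))"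
proof -
  let ?w = "XV i 1"
  let ?T = "cnb n cs ?w"
  have fT: "finite ?T" by (rule cnb_finite)
  have Tsh: "\<exists>k c. x = CV k c \<and> k < length cs \<and> k \<noteq> j \<and> c \<in> {1,2}" if xT: "x \<in> ?T" for x
  proof -
    obtain k c where x: "x = CV k c" using cnb_CV[OF xT] by blast
    hence "CV k c \<in> ?T" using xT by simp
    from cnb_X1[THEN iffD1, OF this] show ?thesis using x nin by auto
  qed
  have vT: "v \<notin> ?T" using v nin cnb_X1[of j 1 n cs i] cnb_X1[of j 2 n cs i] by auto
  have vV: "v \<in> GV n cs" using v j by (auto simp: GV_simps)
  have wV: "?w \<in> GV n cs" using i by (simp add: GV_simps)
  have vadj: "GE n cs v x" if xT: "x \<in> ?T" for x
  proof -
    obtain k c where "x = CV k c" "k < length cs" "k \<noteq> j" "c \<in> {1,2}" using Tsh[OF xT] by blast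
    moreover obtain b where "v = CV j b" "b \<in> {1,2}" using v by auto
    ultimately show ?thesis using A_hub[of j k cs b c n] j by auto
  qed
  have nvw: "\<not> GE n cs v ?w" using v nin by (auto simp: GE_CX)
  have pT: "\<forall>c\<in>?T. is_path (GV n cs) (GE n cs) v ?w [v, c, ?w]"
  proof
    fix c assume c: "c \<in> ?T"
    have "c \<in> GV n cs" using cnb_adj[OF c] GE_V by blast
    moreover have "c \<noteq> ?w" "c \<noteq> v" using cnb_XV[of i 1 n cs ?w] c vT by auto
    ultimately show "is_path (GV n cs) (GE n cs) v ?w [v, c, ?w]"
      using vV wV vadj[OF c] cnb_adj[OF c] v by (auto simp: is_path_Cons2 is_path_single)
  qed
  show ?thesis
  proof (cases "\<exists>k < length cs. (i, False) \<in> cs ! k")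
    case True
    then obtain k where k: "k < length cs" "(i, False) \<in> cs ! k" by blast
    have kj: "k \<noteq> j" using k nin by auto
    have kT: "(i, True) \<notin> cs ! k" using cons[OF k(1)] k(2) by blast
    let ?z = "CV k 2"
    let ?Q = "{[v, ?z, XV i 2, ?w]}"
    let ?S = "insert (XV i 2) ?T"
    let ?B = "{XV i 1, XV i 3, XV i 4, XV i 5}"
    have zT: "?z \<notin> ?T" using kT cnb_X1[of k 2 n cs i] by auto
    have QT: "\<forall>q\<in>?Q. interior q \<inter> ?T = {}" using zT cnb_XV[of i 2 n cs ?w] by (auto simp: interior_simps)
    have zV: "?z \<in> GV n cs" "XV i 2 \<in> GV n cs" using k i by (auto simp: GV_simps)
    have e: "GE n cs v ?z" "GE n cs ?z (XV i 2)" "GE n cs (XV i 2) ?w"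
    proof -
      obtain b where "v = CV j b" "b \<in> {1,2}" using v by auto
      thus "GE n cs v ?z" using A_hub[of j k cs b 2 n] j k kj by auto
      show "GE n cs ?z (XV i 2)" using A_CXd[OF k(1) k(2), of 2] by simp
      show "GE n cs (XV i 2) ?w" using A_X12[OF i] by (simp add: GE_sym)
    qed
    have pQ: "\<forall>q\<in>?Q. is_path (GV n cs) (GE n cs) v ?w q"
      using vV zV wV e v kj by (auto simp: is_path_Cons2 is_path_single)
    have cP: "card ((\<lambda>c. [v, c, ?w]) ` ?T \<union> ?Q) = card ?T + 1"
      using fan_card[OF fT _ QT] by simp
    have cS: "card ?S = card ?T + 1" using fT cnb_XV[of i 2 n cs ?w] by simp
    have "kappa (GV n cs) (GE n cs) v ?w = enat (card ((\<lambda>c. [v, c, ?w]) ` ?T \<union> ?Q))"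
    proof (rule kappa_exact[OF GV_finite, where S = ?S and B = ?B])
      show "v \<noteq> ?w" "v \<notin> ?S" "?w \<notin> ?S" "v \<notin> ?B" "?w \<in> ?B" using v vT cnb_XV[of i 1 n cs ?w] by auto
      show "finite ?S" using fT by simp
    next
      fix x y assume xy: "GE n cs x y" "x \<notin> ?B" and "y \<in> ?B"
      hence "y = XV i 1 \<or> y = XV i 3 \<or> y = XV i 4 \<or> y = XV i 5" by simp
      thus "x \<in> ?S \<or> y \<in> ?S \<or> (x = v \<and> y = ?w)"
      proof (elim disjE)
        assume y: "y = XV i 1"
        show ?thesis
        proof (cases "\<exists>k c. x = CV k c")
          case True
          then obtain k' c where "x = CV k' c" by blast
          thus ?thesis using cnb_I[of n cs k' c ?w] xy y by auto
        next
          case False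
          then obtain i' c' where x: "x = XV i' c'" by (cases x) auto
          thus ?thesis using xy y by (auto simp: GE_XX)
        qed
      qed (use xy in \<open>auto simp: N_X3 N_X4 N_X5\<close>)
    next
      show "int_disjoint_paths (GV n cs) (GE n cs) v ?w ((\<lambda>c. [v, c, ?w]) ` ?T \<union> ?Q)"
        by (rule fan_idp[OF pT pQ _ QT]) simp
      show "card ((\<lambda>c. [v, c, ?w]) ` ?T \<union> ?Q) = card ?S + (if GE n cs v ?w then 1 else 0)"
        using cP cS nvw by simp
    qed
    thus ?thesis using cP True by simp
  next
    case False
    let ?B = "{XV i 1, XV i 2, XV i 3, XV i 4, XV i 5}"
    have cP: "card ((\<lambda>c. [v, c, ?w]) ` ?T \<union> {}) = card ?T"
      using fan_card[OF fT, of "{}"] by simp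
    have "kappa (GV n cs) (GE n cs) v ?w = enat (card ((\<lambda>c. [v, c, ?w]) ` ?T \<union> {}))"
    proof (rule kappa_exact[OF GV_finite, where S = ?T and B = ?B])
      show "finite ?T" by (rule fT)
      show "v \<noteq> ?w" "v \<notin> ?T" "?w \<notin> ?T" "v \<notin> ?B" "?w \<in> ?B" using v vT cnb_XV[of i 1 n cs ?w] by auto
    next
      fix x y assume xy: "GE n cs x y" "x \<notin> ?B" and yB: "y \<in> ?B"
      have xC: "\<exists>k c. x = CV k c"
      proof (cases x)
        case (XV i' c)
        thus ?thesis using xy yB by (auto simp: GE_XX)
      qed auto
      then obtain k' c where x: "x = CV k' c" by blast
      from yB have "y = XV i 1 \<or> y = XV i 2 \<or> y = XV i 3 \<or> y = XV i 4 \<or> y = XV i 5" by simp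
      thus "x \<in> ?T \<or> y \<in> ?T \<or> (x = v \<and> y = ?w)"
      proof (elim disjE)
        assume "y = XV i 1" thus ?thesis using cnb_I[of n cs k' c ?w] xy x by auto
      next
        assume y: "y = XV i 2"
        hence "k' < length cs \<and> ((c = 2 \<and> ((i, True) \<in> cs ! k' \<or> (i, False) \<in> cs ! k')) \<or> (c = 1 \<and> (i, False) \<in> cs ! k'))"
          using xy x by (auto simp: N_X2)
        hence "k' < length cs \<and> c = 2 \<and> (i, True) \<in> cs ! k'" using False by blast
        hence "x \<in> ?T" using x i cnb_X1[of k' c n cs i] by simp
        thus ?thesis by simp
      qed (use xy x in \<open>auto simp: N_X3 N_X4 N_X5\<close>)
    next
      show "int_disjoint_paths (GV n cs) (GE n cs) v ?w ((\<lambda>c. [v, c, ?w]) ` ?T \<union> {})"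
        by (rule fan_idp[OF pT]) auto
      show "card ((\<lambda>c. [v, c, ?w]) ` ?T \<union> {}) = card ?T + (if GE n cs v ?w then 1 else 0)"
        using cP nvw by simp
    qed
    thus ?thesis using cP False by simp
  qed
qed

lemma K4b:
  assumes j: "j < length cs" and i: "i < n" and nin: "(i, True) \<notin> cs ! j" "(i, False) \<notin> cs ! j"
    and v: "v \<in> {CV j 1, CV j 2}"
  shows "kappa (GV n cs) (GE n cs) v (XV i 2) =
         enat (card (cnb n cs (XV i 2)) + (if \<exists>k < length cs. (i, True) \<in> cs ! k then 1 else 0))"
proof -
  let ?w = "XV i 2"
  let ?T = "cnb n cs ?w"
  have fT: "finite ?T" by (rule cnb_finite)
  have Tsh: "\<exists>k c. x = CV k c \<and> k < length cs \<and> k \<noteq> j \<and> c \<in> {1,2}" if xT: "x \<in> ?T" for x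
  proof -
    obtain k c where x: "x = CV k c" using cnb_CV[OF xT] by blast
    hence "CV k c \<in> ?T" using xT by simp
    from cnb_X2[THEN iffD1, OF this] show ?thesis using x nin by auto
  qed
  have vT: "v \<notin> ?T" using v nin cnb_X2[of j 1 n cs i] cnb_X2[of j 2 n cs i] by auto
  have vV: "v \<in> GV n cs" using v j by (auto simp: GV_simps)
  have wV: "?w \<in> GV n cs" using i by (simp add: GV_simps)
  have vadj: "GE n cs v x" if xT: "x \<in> ?T" for x
  proof -
    obtain k c where "x = CV k c" "k < length cs" "k \<noteq> j" "c \<in> {1,2}" using Tsh[OF xT] by blast
    moreover obtain b where "v = CV j b" "b \<in> {1,2}" using v by auto
    ultimately show ?thesis using A_hub[of j k cs b c n] j by auto
  qed
  have nvw: "\<not> GE n cs v ?w" using v nin by (auto simp: GE_CX)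
  have pT: "\<forall>c\<in>?T. is_path (GV n cs) (GE n cs) v ?w [v, c, ?w]"
  proof
    fix c assume c: "c \<in> ?T"
    have "c \<in> GV n cs" using cnb_adj[OF c] GE_V by blast
    moreover have "c \<noteq> ?w" "c \<noteq> v" using cnb_XV[of i 2 n cs ?w] c vT by auto
    ultimately show "is_path (GV n cs) (GE n cs) v ?w [v, c, ?w]"
      using vV wV vadj[OF c] cnb_adj[OF c] v by (auto simp: is_path_Cons2 is_path_single)
  qed
  show ?thesis
  proof (cases "\<exists>k < length cs. (i, True) \<in> cs ! k")
    case True
    then obtain k where k: "k < length cs" "(i, True) \<in> cs ! k" by blast
    have kj: "k \<noteq> j" using k nin by auto
    have kT: "(i, False) \<notin> cs ! k" using cons[OF k(1)] k(2) by blast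
    let ?z = "CV k 1"
    let ?Q = "{[v, ?z, XV i 1, ?w]}"
    let ?S = "insert (XV i 1) ?T"
    let ?B = "{XV i 2, XV i 3, XV i 4, XV i 5}"
    have zT: "?z \<notin> ?T" using kT cnb_X2[of k 1 n cs i] by auto
    have QT: "\<forall>q\<in>?Q. interior q \<inter> ?T = {}" using zT cnb_XV[of i 1 n cs ?w] by (auto simp: interior_simps)
    have zV: "?z \<in> GV n cs" "XV i 1 \<in> GV n cs" using k i by (auto simp: GV_simps)
    have e: "GE n cs v ?z" "GE n cs ?z (XV i 1)" "GE n cs (XV i 1) ?w"
    proof -
      obtain b where "v = CV j b" "b \<in> {1,2}" using v by auto
      thus "GE n cs v ?z" using A_hub[of j k cs b 1 n] j k kj by auto
      show "GE n cs ?z (XV i 1)" using A_CXd[OF k(1) k(2), of 1] by simp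
      show "GE n cs (XV i 1) ?w" using A_X12[OF i] by simp
    qed
    have pQ: "\<forall>q\<in>?Q. is_path (GV n cs) (GE n cs) v ?w q"
      using vV zV wV e v kj by (auto simp: is_path_Cons2 is_path_single)
    have cP: "card ((\<lambda>c. [v, c, ?w]) ` ?T \<union> ?Q) = card ?T + 1"
      using fan_card[OF fT _ QT] by simp
    have cS: "card ?S = card ?T + 1" using fT cnb_XV[of i 1 n cs ?w] by simp
    have "kappa (GV n cs) (GE n cs) v ?w = enat (card ((\<lambda>c. [v, c, ?w]) ` ?T \<union> ?Q))"
    proof (rule kappa_exact[OF GV_finite, where S = ?S and B = ?B])
      show "v \<noteq> ?w" "v \<notin> ?S" "?w \<notin> ?S" "v \<notin> ?B" "?w \<in> ?B" using v vT cnb_XV[of i 2 n cs ?w] by auto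
      show "finite ?S" using fT by simp
    next
      fix x y assume xy: "GE n cs x y" "x \<notin> ?B" and "y \<in> ?B"
      hence "y = XV i 2 \<or> y = XV i 3 \<or> y = XV i 4 \<or> y = XV i 5" by simp
      thus "x \<in> ?S \<or> y \<in> ?S \<or> (x = v \<and> y = ?w)"
      proof (elim disjE)
        assume y: "y = XV i 2"
        show ?thesis
        proof (cases "\<exists>k c. x = CV k c")
          case True
          then obtain k' c where "x = CV k' c" by blast
          thus ?thesis using cnb_I[of n cs k' c ?w] xy y by auto
        next
          case False
          then obtain i' c' where x: "x = XV i' c'" by (cases x) auto
          thus ?thesis using xy y by (auto simp: GE_XX)
        qed
      qed (use xy in \<open>auto simp: N_X3 N_X4 N_X5\<close>)
    next
      show "int_disjoint_paths (GV n cs) (GE n cs) v ?w ((\<lambda>c. [v, c, ?w]) ` ?T \<union> ?Q)"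
        by (rule fan_idp[OF pT pQ _ QT]) simp
      show "card ((\<lambda>c. [v, c, ?w]) ` ?T \<union> ?Q) = card ?S + (if GE n cs v ?w then 1 else 0)"
        using cP cS nvw by simp
    qed
    thus ?thesis using cP True by simp
  next
    case False
    let ?B = "{XV i 1, XV i 2, XV i 3, XV i 4, XV i 5}"
    have cP: "card ((\<lambda>c. [v, c, ?w]) ` ?T \<union> {}) = card ?T"
      using fan_card[OF fT, of "{}"] by simp
    have "kappa (GV n cs) (GE n cs) v ?w = enat (card ((\<lambda>c. [v, c, ?w]) ` ?T \<union> {}))"
    proof (rule kappa_exact[OF GV_finite, where S = ?T and B = ?B])
      show "finite ?T" by (rule fT)
      show "v \<noteq> ?w" "v \<notin> ?T" "?w \<notin> ?T" "v \<notin> ?B" "?w \<in> ?B" using v vT cnb_XV[of i 2 n cs ?w] by auto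
    next
      fix x y assume xy: "GE n cs x y" "x \<notin> ?B" and yB: "y \<in> ?B"
      have xC: "\<exists>k c. x = CV k c"
      proof (cases x)
        case (XV i' c)
        thus ?thesis using xy yB by (auto simp: GE_XX)
      qed auto
      then obtain k' c where x: "x = CV k' c" by blast
      from yB have "y = XV i 1 \<or> y = XV i 2 \<or> y = XV i 3 \<or> y = XV i 4 \<or> y = XV i 5" by simp
      thus "x \<in> ?T \<or> y \<in> ?T \<or> (x = v \<and> y = ?w)"
      proof (elim disjE)
        assume y: "y = XV i 1"
        hence "k' < length cs \<and> ((c = 1 \<and> ((i, True) \<in> cs ! k' \<or> (i, False) \<in> cs ! k')) \<or> (c = 2 \<and> (i, True) \<in> cs ! k'))"
          using xy x by (auto simp: GE_CX)
        hence "k' < length cs \<and> c = 1 \<and> (i, False) \<in> cs ! k'" using False by blast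
        hence "x \<in> ?T" using x i cnb_X2[of k' c n cs i] by simp
        thus ?thesis by simp
      next
        assume "y = XV i 2" thus ?thesis using cnb_I[of n cs k' c ?w] xy x by auto
      qed (use xy x in \<open>auto simp: N_X3 N_X4 N_X5\<close>)
    next
      show "int_disjoint_paths (GV n cs) (GE n cs) v ?w ((\<lambda>c. [v, c, ?w]) ` ?T \<union> {})"
        by (rule fan_idp[OF pT]) auto
      show "card ((\<lambda>c. [v, c, ?w]) ` ?T \<union> {}) = card ?T + (if GE n cs v ?w then 1 else 0)"
        using cP nvw by simp
    qed
    thus ?thesis using cP False by simp
  qed
qed


lemma K5a:
  assumes j: "j < length cs" and pos: "(i, True) \<in> cs ! j"
  shows "kappa (GV n cs) (GE n cs) (CV j 2) (XV i 2) = enat (card (cnb n cs (XV i 2)) + 1)"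
proof -
  let ?v = "CV j 2" and ?w = "XV i 2"
  let ?T = "cnb n cs ?w"
  let ?T' = "?T - {?v}"
  have i: "i < n" using lit_lt[OF j pos] .
  have neg: "(i, False) \<notin> cs ! j" using cons[OF j pos] .
  have fT: "finite ?T" by (rule cnb_finite)
  have vT: "?v \<in> ?T" using cnb_X2[of j 2 n cs i] i j pos by simp
  have Tsh: "\<exists>k c. x = CV k c \<and> k < length cs \<and> k \<noteq> j \<and> c \<in> {1,2}" if xT: "x \<in> ?T'" for x
  proof -
    obtain k c where x: "x = CV k c" using cnb_CV[of x n cs ?w] xT by blast
    hence "CV k c \<in> ?T" using xT by simp
    from cnb_X2[THEN iffD1, OF this] show ?thesis using x neg xT by auto
  qed
  have vV: "?v \<in> GV n cs" "?w \<in> GV n cs" "XV i 1 \<in> GV n cs" using i j by (auto simp: GV_simps)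
  have vadj: "GE n cs ?v x" if xT: "x \<in> ?T'" for x
  proof -
    obtain k c where "x = CV k c" "k < length cs" "k \<noteq> j" "c \<in> {1,2}" using Tsh[OF xT] by blast
    thus ?thesis using A_hub[of j k cs 2 c n] j by auto
  qed
  have pT: "\<forall>c\<in>?T'. is_path (GV n cs) (GE n cs) ?v ?w [?v, c, ?w]"
  proof
    fix c assume c: "c \<in> ?T'"
    have "c \<in> GV n cs" using cnb_adj[of c n cs ?w] c GE_V by blast
    moreover have "c \<noteq> ?w" "c \<noteq> ?v" using cnb_XV[of i 2 n cs ?w] c by auto
    ultimately show "is_path (GV n cs) (GE n cs) ?v ?w [?v, c, ?w]"
      using vV vadj[OF c] cnb_adj[of c n cs ?w] c by (auto simp: is_path_Cons2 is_path_single)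
  qed
  have e: "GE n cs ?v ?w" "GE n cs ?v (XV i 1)" "GE n cs (XV i 1) ?w"
    using A_CXd[OF j pos, of 2] A_CXp[OF j pos, of 2] A_X12[OF i] by auto
  let ?Q = "{[?v, ?w], [?v, XV i 1, ?w]}"
  let ?S = "insert (XV i 1) ?T'"
  let ?B = "{XV i 2, XV i 3, XV i 4, XV i 5}"
  let ?P = "(\<lambda>c. [?v, c, ?w]) ` ?T' \<union> ?Q"
  have QT: "\<forall>q\<in>?Q. interior q \<inter> ?T' = {}" using cnb_XV[of i 1 n cs ?w] by (auto simp: interior_simps)
  have pQ: "\<forall>q\<in>?Q. is_path (GV n cs) (GE n cs) ?v ?w q"
    using vV e by (auto simp: is_path_Cons2 is_path_single)
  have cT': "card ?T' + 1 = card ?T"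
  proof -
    have "card ?T > 0" using fT vT card_gt_0_iff by blast
    thus ?thesis using fT vT by (simp add: card_Diff_singleton_if)
  qed
  have cP: "card ?P = card ?T + 1"
    using fan_card[of ?T' ?Q, OF _ _ QT] fT cT' by simp
  have cS: "card ?S = card ?T" using fT cT' cnb_XV[of i 1 n cs ?w] by simp
  have "kappa (GV n cs) (GE n cs) ?v ?w = enat (card ?P)"
  proof (rule kappa_exact[OF GV_finite, where S = ?S and B = ?B])
    show "?v \<noteq> ?w" "?v \<notin> ?S" "?w \<notin> ?S" "?v \<notin> ?B" "?w \<in> ?B" using cnb_XV[of i 2 n cs ?w] by auto
    show "finite ?S" using fT by simp
  next
    fix x y assume xy: "GE n cs x y" "x \<notin> ?B" and "y \<in> ?B"
    hence "y = XV i 2 \<or> y = XV i 3 \<or> y = XV i 4 \<or> y = XV i 5" by simp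
    thus "x \<in> ?S \<or> y \<in> ?S \<or> (x = ?v \<and> y = ?w)"
    proof (elim disjE)
      assume y: "y = XV i 2"
      show ?thesis
      proof (cases "\<exists>k c. x = CV k c")
        case True
        then obtain k' c where "x = CV k' c" by blast
        thus ?thesis using cnb_I[of n cs k' c ?w] xy y by auto
      next
        case False
        then obtain i' c' where x: "x = XV i' c'" by (cases x) auto
        thus ?thesis using xy y by (auto simp: GE_XX)
      qed
    qed (use xy in \<open>auto simp: N_X3 N_X4 N_X5\<close>)
  next
    show "int_disjoint_paths (GV n cs) (GE n cs) ?v ?w ?P"
      by (rule fan_idp[OF pT pQ _ QT]) (auto simp: interior_simps)
    show "card ?P = card ?S + (if GE n cs ?v ?w then 1 else 0)"
      using cP cS e by simp
  qed
  thus ?thesis using cP by simp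
qed

lemma K5b:
  assumes j: "j < length cs" and pos: "(i, True) \<in> cs ! j"
  shows "kappa (GV n cs) (GE n cs) (CV j 1) (XV i 2) = enat (card (cnb n cs (XV i 2)) + 1)"
proof -
  let ?v = "CV j 1" and ?w = "XV i 2" and ?u = "CV j 2"
  let ?T = "cnb n cs ?w"
  let ?T' = "?T - {?u}"
  have i: "i < n" using lit_lt[OF j pos] .
  have neg: "(i, False) \<notin> cs ! j" using cons[OF j pos] .
  have fT: "finite ?T" by (rule cnb_finite)
  have uT: "?u \<in> ?T" using cnb_X2[of j 2 n cs i] i j pos by simp
  have vT: "?v \<notin> ?T" using cnb_X2[of j 1 n cs i] neg by simp
  have Tsh: "\<exists>k c. x = CV k c \<and> k < length cs \<and> k \<noteq> j \<and> c \<in> {1,2}" if xT: "x \<in> ?T'" for x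
  proof -
    obtain k c where x: "x = CV k c" using cnb_CV[of x n cs ?w] xT by blast
    hence "CV k c \<in> ?T" using xT by simp
    from cnb_X2[THEN iffD1, OF this] show ?thesis using x neg xT by auto
  qed
  have vV: "?v \<in> GV n cs" "?w \<in> GV n cs" "XV i 1 \<in> GV n cs" "CV j 3 \<in> GV n cs" "?u \<in> GV n cs"
    using i j by (auto simp: GV_simps)
  have vadj: "GE n cs ?v x" if xT: "x \<in> ?T'" for x
  proof -
    obtain k c where "x = CV k c" "k < length cs" "k \<noteq> j" "c \<in> {1,2}" using Tsh[OF xT] by blast
    thus ?thesis using A_hub[of j k cs 1 c n] j by auto
  qed
  have pT: "\<forall>c\<in>?T'. is_path (GV n cs) (GE n cs) ?v ?w [?v, c, ?w]"
  proof
    fix c assume c: "c \<in> ?T'"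
    have "c \<in> GV n cs" using cnb_adj[of c n cs ?w] c GE_V by blast
    moreover have "c \<noteq> ?w" "c \<noteq> ?v" using cnb_XV[of i 2 n cs ?w] c vT by auto
    ultimately show "is_path (GV n cs) (GE n cs) ?v ?w [?v, c, ?w]"
      using vV vadj[OF c] cnb_adj[of c n cs ?w] c by (auto simp: is_path_Cons2 is_path_single)
  qed
  have e: "GE n cs ?v (CV j 3)" "GE n cs (CV j 3) ?u" "GE n cs ?u ?w" "GE n cs ?v (XV i 1)" "GE n cs (XV i 1) ?w"
    using A_C[OF j, of 1 3] A_C[OF j, of 2 3] A_CXd[OF j pos, of 2] A_CXd[OF j pos, of 1] A_X12[OF i]
    by (auto simp: GE_sym[of n cs "CV j 3"])
  have nvw: "\<not> GE n cs ?v ?w" using neg by (simp add: GE_CX)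
  let ?Q = "{[?v, CV j 3, ?u, ?w], [?v, XV i 1, ?w]}"
  let ?S = "insert (XV i 1) ?T"
  let ?B = "{XV i 2, XV i 3, XV i 4, XV i 5}"
  let ?P = "(\<lambda>c. [?v, c, ?w]) ` ?T' \<union> ?Q"
  have c3T: "CV j 3 \<notin> ?T" using cnb_X2[of j 3 n cs i] by simp
  have QT: "\<forall>q\<in>?Q. interior q \<inter> ?T' = {}" using cnb_XV[of i 1 n cs ?w] c3T by (auto simp: interior_simps)
  have pQ: "\<forall>q\<in>?Q. is_path (GV n cs) (GE n cs) ?v ?w q"
    using vV e by (auto simp: is_path_Cons2 is_path_single)
  have cT': "card ?T' + 1 = card ?T"
  proof -
    have "card ?T > 0" using fT uT card_gt_0_iff by blast
    thus ?thesis using fT uT by (simp add: card_Diff_singleton_if)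
  qed
  have cP: "card ?P = card ?T + 1"
    using fan_card[of ?T' ?Q, OF _ _ QT] fT cT' by simp
  have cS: "card ?S = card ?T + 1" using fT cnb_XV[of i 1 n cs ?w] by simp
  have "kappa (GV n cs) (GE n cs) ?v ?w = enat (card ?P)"
  proof (rule kappa_exact[OF GV_finite, where S = ?S and B = ?B])
    show "?v \<noteq> ?w" "?v \<notin> ?S" "?w \<notin> ?S" "?v \<notin> ?B" "?w \<in> ?B" using cnb_XV[of i 2 n cs ?w] vT by auto
    show "finite ?S" using fT by simp
  next
    fix x y assume xy: "GE n cs x y" "x \<notin> ?B" and "y \<in> ?B"
    hence "y = XV i 2 \<or> y = XV i 3 \<or> y = XV i 4 \<or> y = XV i 5" by simp
    thus "x \<in> ?S \<or> y \<in> ?S \<or> (x = ?v \<and> y = ?w)"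
    proof (elim disjE)
      assume y: "y = XV i 2"
      show ?thesis
      proof (cases "\<exists>k c. x = CV k c")
        case True
        then obtain k' c where "x = CV k' c" by blast
        thus ?thesis using cnb_I[of n cs k' c ?w] xy y by auto
      next
        case False
        then obtain i' c' where x: "x = XV i' c'" by (cases x) auto
        thus ?thesis using xy y by (auto simp: GE_XX)
      qed
    qed (use xy in \<open>auto simp: N_X3 N_X4 N_X5\<close>)
  next
    show "int_disjoint_paths (GV n cs) (GE n cs) ?v ?w ?P"
      by (rule fan_idp[OF pT pQ _ QT]) (auto simp: interior_simps)
    show "card ?P = card ?S + (if GE n cs ?v ?w then 1 else 0)"
      using cP cS nvw by simp
  qed
  thus ?thesis using cP by simp
qed

lemma K6a:
  assumes j: "j < length cs" and neg: "(i, False) \<in> cs ! j"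
  shows "kappa (GV n cs) (GE n cs) (CV j 1) (XV i 1) = enat (card (cnb n cs (XV i 1)) + 1)"
proof -
  let ?v = "CV j 1" and ?w = "XV i 1"
  let ?T = "cnb n cs ?w"
  let ?T' = "?T - {?v}"
  have i: "i < n" using lit_lt[OF j neg] .
  have posn: "(i, True) \<notin> cs ! j" using cons[OF j] neg by blast
  have fT: "finite ?T" by (rule cnb_finite)
  have vT: "?v \<in> ?T" using cnb_X1[of j 1 n cs i] i j neg by simp
  have Tsh: "\<exists>k c. x = CV k c \<and> k < length cs \<and> k \<noteq> j \<and> c \<in> {1,2}" if xT: "x \<in> ?T'" for x
  proof -
    obtain k c where x: "x = CV k c" using cnb_CV[of x n cs ?w] xT by blast
    hence "CV k c \<in> ?T" using xT by simp
    from cnb_X1[THEN iffD1, OF this] show ?thesis using x posn xT by auto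
  qed
  have vV: "?v \<in> GV n cs" "?w \<in> GV n cs" "XV i 2 \<in> GV n cs" using i j by (auto simp: GV_simps)
  have vadj: "GE n cs ?v x" if xT: "x \<in> ?T'" for x
  proof -
    obtain k c where "x = CV k c" "k < length cs" "k \<noteq> j" "c \<in> {1,2}" using Tsh[OF xT] by blast
    thus ?thesis using A_hub[of j k cs 1 c n] j by auto
  qed
  have pT: "\<forall>c\<in>?T'. is_path (GV n cs) (GE n cs) ?v ?w [?v, c, ?w]"
  proof
    fix c assume c: "c \<in> ?T'"
    have "c \<in> GV n cs" using cnb_adj[of c n cs ?w] c GE_V by blast
    moreover have "c \<noteq> ?w" "c \<noteq> ?v" using cnb_XV[of i 1 n cs ?w] c by auto
    ultimately show "is_path (GV n cs) (GE n cs) ?v ?w [?v, c, ?w]"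
      using vV vadj[OF c] cnb_adj[of c n cs ?w] c by (auto simp: is_path_Cons2 is_path_single)
  qed
  have e: "GE n cs ?v ?w" "GE n cs ?v (XV i 2)" "GE n cs (XV i 2) ?w"
    using A_CXd[OF j neg, of 1] A_CXn[OF j neg, of 1] A_X12[OF i] by (auto simp: GE_sym[of n cs "XV i 2"])
  let ?Q = "{[?v, ?w], [?v, XV i 2, ?w]}"
  let ?S = "insert (XV i 2) ?T'"
  let ?B = "{XV i 1, XV i 3, XV i 4, XV i 5}"
  let ?P = "(\<lambda>c. [?v, c, ?w]) ` ?T' \<union> ?Q"
  have QT: "\<forall>q\<in>?Q. interior q \<inter> ?T' = {}" using cnb_XV[of i 2 n cs ?w] by (auto simp: interior_simps)
  have pQ: "\<forall>q\<in>?Q. is_path (GV n cs) (GE n cs) ?v ?w q"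
    using vV e by (auto simp: is_path_Cons2 is_path_single)
  have cT': "card ?T' + 1 = card ?T"
  proof -
    have "card ?T > 0" using fT vT card_gt_0_iff by blast
    thus ?thesis using fT vT by (simp add: card_Diff_singleton_if)
  qed
  have cP: "card ?P = card ?T + 1"
    using fan_card[of ?T' ?Q, OF _ _ QT] fT cT' by simp
  have cS: "card ?S = card ?T" using fT cT' cnb_XV[of i 2 n cs ?w] by simp
  have "kappa (GV n cs) (GE n cs) ?v ?w = enat (card ?P)"
  proof (rule kappa_exact[OF GV_finite, where S = ?S and B = ?B])
    show "?v \<noteq> ?w" "?v \<notin> ?S" "?w \<notin> ?S" "?v \<notin> ?B" "?w \<in> ?B" using cnb_XV[of i 1 n cs ?w] by auto
    show "finite ?S" using fT by simp
  next
    fix x y assume xy: "GE n cs x y" "x \<notin> ?B" and "y \<in> ?B"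
    hence "y = XV i 1 \<or> y = XV i 3 \<or> y = XV i 4 \<or> y = XV i 5" by simp
    thus "x \<in> ?S \<or> y \<in> ?S \<or> (x = ?v \<and> y = ?w)"
    proof (elim disjE)
      assume y: "y = XV i 1"
      show ?thesis
      proof (cases "\<exists>k c. x = CV k c")
        case True
        then obtain k' c where "x = CV k' c" by blast
        thus ?thesis using cnb_I[of n cs k' c ?w] xy y by auto
      next
        case False
        then obtain i' c' where x: "x = XV i' c'" by (cases x) auto
        thus ?thesis using xy y by (auto simp: GE_XX)
      qed
    qed (use xy in \<open>auto simp: N_X3 N_X4 N_X5\<close>)
  next
    show "int_disjoint_paths (GV n cs) (GE n cs) ?v ?w ?P"
      by (rule fan_idp[OF pT pQ _ QT]) (auto simp: interior_simps)
    show "card ?P = card ?S + (if GE n cs ?v ?w then 1 else 0)"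
      using cP cS e by simp
  qed
  thus ?thesis using cP by simp
qed

lemma K6b:
  assumes j: "j < length cs" and neg: "(i, False) \<in> cs ! j"
  shows "kappa (GV n cs) (GE n cs) (CV j 2) (XV i 1) = enat (card (cnb n cs (XV i 1)) + 1)"
proof -
  let ?v = "CV j 2" and ?w = "XV i 1" and ?u = "CV j 1"
  let ?T = "cnb n cs ?w"
  let ?T' = "?T - {?u}"
  have i: "i < n" using lit_lt[OF j neg] .
  have posn: "(i, True) \<notin> cs ! j" using cons[OF j] neg by blast
  have fT: "finite ?T" by (rule cnb_finite)
  have uT: "?u \<in> ?T" using cnb_X1[of j 1 n cs i] i j neg by simp
  have vT: "?v \<notin> ?T" using cnb_X1[of j 2 n cs i] posn by simp
  have Tsh: "\<exists>k c. x = CV k c \<and> k < length cs \<and> k \<noteq> j \<and> c \<in> {1,2}" if xT: "x \<in> ?T'" for x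
  proof -
    obtain k c where x: "x = CV k c" using cnb_CV[of x n cs ?w] xT by blast
    hence "CV k c \<in> ?T" using xT by simp
    from cnb_X1[THEN iffD1, OF this] show ?thesis using x posn xT by auto
  qed
  have vV: "?v \<in> GV n cs" "?w \<in> GV n cs" "XV i 2 \<in> GV n cs" "CV j 3 \<in> GV n cs" "?u \<in> GV n cs"
    using i j by (auto simp: GV_simps)
  have vadj: "GE n cs ?v x" if xT: "x \<in> ?T'" for x
  proof -
    obtain k c where "x = CV k c" "k < length cs" "k \<noteq> j" "c \<in> {1,2}" using Tsh[OF xT] by blast
    thus ?thesis using A_hub[of j k cs 2 c n] j by auto
  qed
  have pT: "\<forall>c\<in>?T'. is_path (GV n cs) (GE n cs) ?v ?w [?v, c, ?w]"
  proof
    fix c assume c: "c \<in> ?T'"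
    have "c \<in> GV n cs" using cnb_adj[of c n cs ?w] c GE_V by blast
    moreover have "c \<noteq> ?w" "c \<noteq> ?v" using cnb_XV[of i 1 n cs ?w] c vT by auto
    ultimately show "is_path (GV n cs) (GE n cs) ?v ?w [?v, c, ?w]"
      using vV vadj[OF c] cnb_adj[of c n cs ?w] c by (auto simp: is_path_Cons2 is_path_single)
  qed
  have e: "GE n cs ?v (CV j 3)" "GE n cs (CV j 3) ?u" "GE n cs ?u ?w" "GE n cs ?v (XV i 2)" "GE n cs (XV i 2) ?w"
    using A_C[OF j, of 2 3] A_C[OF j, of 1 3] A_CXd[OF j neg, of 1] A_CXd[OF j neg, of 2] A_X12[OF i]
    by (auto simp: GE_sym[of n cs "CV j 3"] GE_sym[of n cs "XV i 2"])
  have nvw: "\<not> GE n cs ?v ?w" using posn by (simp add: GE_CX)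
  let ?Q = "{[?v, CV j 3, ?u, ?w], [?v, XV i 2, ?w]}"
  let ?S = "insert (XV i 2) ?T"
  let ?B = "{XV i 1, XV i 3, XV i 4, XV i 5}"
  let ?P = "(\<lambda>c. [?v, c, ?w]) ` ?T' \<union> ?Q"
  have c3T: "CV j 3 \<notin> ?T" using cnb_X1[of j 3 n cs i] by simp
  have QT: "\<forall>q\<in>?Q. interior q \<inter> ?T' = {}" using cnb_XV[of i 2 n cs ?w] c3T by (auto simp: interior_simps)
  have pQ: "\<forall>q\<in>?Q. is_path (GV n cs) (GE n cs) ?v ?w q"
    using vV e by (auto simp: is_path_Cons2 is_path_single)
  have cT': "card ?T' + 1 = card ?T"
  proof -
    have "card ?T > 0" using fT uT card_gt_0_iff by blast
    thus ?thesis using fT uT by (simp add: card_Diff_singleton_if)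
  qed
  have cP: "card ?P = card ?T + 1"
    using fan_card[of ?T' ?Q, OF _ _ QT] fT cT' by simp
  have cS: "card ?S = card ?T + 1" using fT cnb_XV[of i 2 n cs ?w] by simp
  have "kappa (GV n cs) (GE n cs) ?v ?w = enat (card ?P)"
  proof (rule kappa_exact[OF GV_finite, where S = ?S and B = ?B])
    show "?v \<noteq> ?w" "?v \<notin> ?S" "?w \<notin> ?S" "?v \<notin> ?B" "?w \<in> ?B" using cnb_XV[of i 1 n cs ?w] vT by auto
    show "finite ?S" using fT by simp
  next
    fix x y assume xy: "GE n cs x y" "x \<notin> ?B" and "y \<in> ?B"
    hence "y = XV i 1 \<or> y = XV i 3 \<or> y = XV i 4 \<or> y = XV i 5" by simp
    thus "x \<in> ?S \<or> y \<in> ?S \<or> (x = ?v \<and> y = ?w)"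
    proof (elim disjE)
      assume y: "y = XV i 1"
      show ?thesis
      proof (cases "\<exists>k c. x = CV k c")
        case True
        then obtain k' c where "x = CV k' c" by blast
        thus ?thesis using cnb_I[of n cs k' c ?w] xy y by auto
      next
        case False
        then obtain i' c' where x: "x = XV i' c'" by (cases x) auto
        thus ?thesis using xy y by (auto simp: GE_XX)
      qed
    qed (use xy in \<open>auto simp: N_X3 N_X4 N_X5\<close>)
  next
    show "int_disjoint_paths (GV n cs) (GE n cs) ?v ?w ?P"
      by (rule fan_idp[OF pT pQ _ QT]) (auto simp: interior_simps)
    show "card ?P = card ?S + (if GE n cs ?v ?w then 1 else 0)"
      using cP cS nvw by simp
  qed
  thus ?thesis using cP by simp
qed


lemma step_C:
  assumes W: "resolving (GV n cs) (GE n cs) W" and j: "j < length cs"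
  shows "2 \<le> card (W \<inter> {CV j 3, CV j 4, CV j 5})"
proof -
  have key: "CV j a \<in> W \<or> CV j a' \<in> W" if a: "a \<in> {3,4,5}" "a' \<in> {3,4,5}" "a \<noteq> a'" for a a'
  proof (rule ccontr)
    assume "\<not> (CV j a \<in> W \<or> CV j a' \<in> W)"
    hence nW: "CV j a \<notin> W" "CV j a' \<notin> W" by auto
    have "CV j a \<in> GV n cs" "CV j a' \<in> GV n cs" using a j by (auto simp: GV_simps)
    then obtain w where w: "w \<in> W" "kappa (GV n cs) (GE n cs) (CV j a) w \<noteq> kappa (GV n cs) (GE n cs) (CV j a') w"
      using res_sep[OF W] a(3) by blast
    have "w \<noteq> CV j a" "w \<noteq> CV j a'" using w(1) nW by auto
    thus False using K9c[OF j a(1,2)] w(2) by blast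
  qed
  show ?thesis
  proof (cases "CV j 3 \<in> W")
    case True
    show ?thesis
    proof (cases "CV j 4 \<in> W")
      case True
      hence "{CV j 3, CV j 4} \<subseteq> W \<inter> {CV j 3, CV j 4, CV j 5}" using \<open>CV j 3 \<in> W\<close> by auto
      from card_mono[OF _ this] show ?thesis by simp
    next
      case False
      hence "CV j 5 \<in> W" using key[of 4 5] by auto
      hence "{CV j 3, CV j 5} \<subseteq> W \<inter> {CV j 3, CV j 4, CV j 5}" using \<open>CV j 3 \<in> W\<close> by auto
      from card_mono[OF _ this] show ?thesis by simp
    qed
  next
    case False
    hence "CV j 4 \<in> W" "CV j 5 \<in> W" using key[of 3 4] key[of 3 5] by auto
    hence "{CV j 4, CV j 5} \<subseteq> W \<inter> {CV j 3, CV j 4, CV j 5}" by auto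
    from card_mono[OF _ this] show ?thesis by simp
  qed
qed

lemma step_X45:
  assumes W: "resolving (GV n cs) (GE n cs) W" and i: "i < n"
  shows "XV i 4 \<in> W \<or> XV i 5 \<in> W"
proof (rule ccontr)
  assume "\<not> (XV i 4 \<in> W \<or> XV i 5 \<in> W)"
  hence nW: "XV i 4 \<notin> W" "XV i 5 \<notin> W" by auto
  have "XV i 4 \<in> GV n cs" "XV i 5 \<in> GV n cs" using i by (auto simp: GV_simps)
  then obtain w where w: "w \<in> W" "kappa (GV n cs) (GE n cs) (XV i 4) w \<noteq> kappa (GV n cs) (GE n cs) (XV i 5) w"
    using res_sep[OF W] by fastforce
  have "w \<noteq> XV i 4" "w \<noteq> XV i 5" using w(1) nW by auto
  thus False using K9x[OF i] w(2) by blast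
qed

lemma step_X:
  assumes W: "resolving (GV n cs) (GE n cs) W" and fW: "finite W" and i: "i < n"
  shows "2 \<le> card (W \<inter> Xs i)"
proof (rule ccontr)
  assume "\<not> 2 \<le> card (W \<inter> Xs i)"
  hence c1: "card (W \<inter> Xs i) \<le> 1" by simp
  have fin: "finite (W \<inter> Xs i)" using fW by simp
  have one: "W \<inter> Xs i = {t}" if "t \<in> W \<inter> Xs i" for t
  proof -
    have "card (W \<inter> Xs i) = 1" using c1 that fin by (metis card_0_eq empty_iff le_less_Suc_eq less_one One_nat_def le_neq_implies_less)
    then obtain t' where "W \<inter> Xs i = {t'}" by (rule card_1_singletonE)
    thus ?thesis using that by auto
  qed
  have V: "XV i a \<in> GV n cs" if "a \<in> {1,2,3,4,5}" for a using that i by (auto simp: GV_simps)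
  have outside: "kappa (GV n cs) (GE n cs) u w = kappa (GV n cs) (GE n cs) v w"
    if "w \<notin> Xs i" "u \<in> {XV i 3, XV i 4, XV i 5}" "v \<in> {XV i 3, XV i 4, XV i 5}" for u v w
    using K8[OF i that(2) that(3)] K8[OF i that(3) that(2)] that(1) by (simp add: Xs_def order_antisym)
  from step_X45[OF W i] show False
  proof
    assume t: "XV i 4 \<in> W"
    hence Wi: "W \<inter> Xs i = {XV i 4}" using one[of "XV i 4"] by (simp add: Xs_def)
    obtain w where w: "w \<in> W" "kappa (GV n cs) (GE n cs) (XV i 3) w \<noteq> kappa (GV n cs) (GE n cs) (XV i 5) w"
      using res_sep[OF W V[of 3] V[of 5]] by auto
    show False
    proof (cases "w \<in> Xs i")
      case True
      hence "w = XV i 4" using Wi w(1) by auto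
      thus False using w(2) K7a[OF i] K7b[OF i] by simp
    next
      case False
      thus False using outside[OF False, of "XV i 3" "XV i 5"] w(2) by simp
    qed
  next
    assume t: "XV i 5 \<in> W"
    hence Wi: "W \<inter> Xs i = {XV i 5}" using one[of "XV i 5"] by (simp add: Xs_def)
    obtain w where w: "w \<in> W" "kappa (GV n cs) (GE n cs) (XV i 3) w \<noteq> kappa (GV n cs) (GE n cs) (XV i 4) w"
      using res_sep[OF W V[of 3] V[of 4]] by auto
    show False
    proof (cases "w \<in> Xs i")
      case True
      hence "w = XV i 5" using Wi w(1) by auto
      thus False using w(2) K7c[OF i] K7d[OF i] by simp
    next
      case False
      thus False using outside[OF False, of "XV i 3" "XV i 4"] w(2) by simp
    qed
  qed
qed


lemma main_res:
  assumes W: "resolving (GV n cs) (GE n cs) W" and fW: "finite W"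
    and cW: "card W = 2 * (length cs + n)"
  shows "satisfiable cs"
proof -
  let ?V = "GV n cs" and ?E = "GE n cs" and ?m = "length cs"
  have WV: "W \<subseteq> ?V" using W by (simp add: resolving_def)
  have dec: "card W = (\<Sum>i<n. card (W \<inter> Xs i)) + (\<Sum>j<?m. card (W \<inter> Cs j))"
    by (rule card_decomp[OF WV fW])
  have geX: "\<forall>i\<in>{..<n}. 2 \<le> card (W \<inter> Xs i)" using step_X[OF W fW] by auto
  have geC: "\<forall>j\<in>{..<?m}. 2 \<le> card (W \<inter> Cs j)"
  proof
    fix j assume "j \<in> {..<?m}"
    hence j: "j < ?m" by simp
    have "W \<inter> {CV j 3, CV j 4, CV j 5} \<subseteq> W \<inter> Cs j" by (auto simp: Cs_def)
    hence "card (W \<inter> {CV j 3, CV j 4, CV j 5}) \<le> card (W \<inter> Cs j)" using fW by (intro card_mono) auto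
    thus "2 \<le> card (W \<inter> Cs j)" using step_C[OF W j] by simp
  qed
  have sX: "(\<Sum>i<n. card (W \<inter> Xs i)) \<ge> 2 * n"
    using sum_mono[of "{..<n}" "\<lambda>_. 2::nat" "\<lambda>i. card (W \<inter> Xs i)"] geX by simp
  have sC: "(\<Sum>j<?m. card (W \<inter> Cs j)) \<ge> 2 * ?m"
    using sum_mono[of "{..<?m}" "\<lambda>_. 2::nat" "\<lambda>j. card (W \<inter> Cs j)"] geC by simp
  have eX: "\<forall>i\<in>{..<n}. card (W \<inter> Xs i) = 2"
    by (rule sum_all_eq) (use geX dec cW sC in auto)
  have eC: "\<forall>j\<in>{..<?m}. card (W \<inter> Cs j) = 2"
    by (rule sum_all_eq) (use geC dec cW sX in auto)
  have C126: "CV j 1 \<notin> W \<and> CV j 2 \<notin> W \<and> CV j 6 \<notin> W" if j: "j < ?m" for j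
  proof -
    have c2: "card (W \<inter> Cs j) = 2" using eC j by auto
    have s2: "2 \<le> card (W \<inter> {CV j 3, CV j 4, CV j 5})" using step_C[OF W j] .
    have fin: "finite (W \<inter> Cs j)" using fW by simp
    have sub: "W \<inter> {CV j 3, CV j 4, CV j 5} \<subseteq> W \<inter> Cs j" unfolding Cs_def by blast
    have eq: "W \<inter> {CV j 3, CV j 4, CV j 5} = W \<inter> Cs j"
    proof (rule card_subset_eq[OF fin sub])
      have "card (W \<inter> {CV j 3, CV j 4, CV j 5}) \<le> card (W \<inter> Cs j)"
        using fin sub by (rule card_mono)
      thus "card (W \<inter> {CV j 3, CV j 4, CV j 5}) = card (W \<inter> Cs j)" using c2 s2 by simp
    qed
    have nW: "CV j c \<notin> W" if c: "c \<in> {1,2,6}" for c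
    proof
      assume cW: "CV j c \<in> W"
      have "CV j c \<in> Cs j" using c by (auto simp: Cs_def)
      with cW have "CV j c \<in> W \<inter> Cs j" by (rule IntI)
      hence "CV j c \<in> W \<inter> {CV j 3, CV j 4, CV j 5}" by (simp only: eq)
      hence "CV j c \<in> {CV j 3, CV j 4, CV j 5}" by (rule IntD2)
      thus False using c by auto
    qed
    thus ?thesis by simp
  qed
  have X12: "\<not> (XV i 1 \<in> W \<and> XV i 2 \<in> W)" if i: "i < n" for i
  proof
    assume a: "XV i 1 \<in> W \<and> XV i 2 \<in> W"
    have c2: "card (W \<inter> Xs i) = 2" using eX i by auto
    obtain t where t: "t \<in> W" "t \<in> {XV i 4, XV i 5}" using step_X45[OF W i] by auto
    have "{XV i 1, XV i 2, t} \<subseteq> W \<inter> Xs i" using a t by (auto simp: Xs_def)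
    hence "card {XV i 1, XV i 2, t} \<le> card (W \<inter> Xs i)" using fW by (intro card_mono) auto
    moreover have "card {XV i 1, XV i 2, t} = 3" using t by auto
    ultimately show False using c2 by simp
  qed
  define \<sigma> where "\<sigma> i = (XV i 1 \<in> W)" for i
  show ?thesis
  proof (rule ccontr)
    assume "\<not> satisfiable cs"
    hence "\<not> (\<forall>C\<in>set cs. \<exists>(i, b)\<in>C. \<sigma> i = b)" unfolding satisfiable_def by blast
    then obtain C where C: "C \<in> set cs" "\<not> (\<exists>(i, b)\<in>C. \<sigma> i = b)" by blast
    then obtain j where j: "j < ?m" and jC: "cs ! j = C" by (auto simp: in_set_conv_nth)
    have uns: "\<forall>(i, b)\<in>cs ! j. \<sigma> i \<noteq> b" using C(2) jC by blast
    have v12: "CV j 1 \<in> ?V" "CV j 2 \<in> ?V" using j by (auto simp: GV_simps)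
    obtain w where w: "w \<in> W" "kappa ?V ?E (CV j 1) w \<noteq> kappa ?V ?E (CV j 2) w"
      using res_sep[OF W v12] by auto
    have wV: "w \<in> ?V" using w(1) WV by auto
    show False
    proof (cases w)
      case (CV k a)
      have k: "k < ?m" and a16: "1 \<le> a" "a \<le> 6" using wV CV by (auto simp: GV_simps)
      have "a \<noteq> 1" "a \<noteq> 2" "a \<noteq> 6" using C126[OF k] w(1) CV by auto
      hence a: "a \<in> {3,4,5}" using a16 by auto
      show False
      proof (cases "k = j")
        case False
        thus False using K1[OF _ j k, of 1 a] K1[OF _ j k, of 2 a] a w(2) CV by auto
      next
        case True
        have "kappa ?V ?E (CV j 1) (CV j a) = 4 \<and> kappa ?V ?E (CV j 2) (CV j a) = 4"
        proof -
          consider "a = 3" | "a = 4" | "a = 5" using a by auto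
          thus ?thesis
          proof cases
            case 1 thus ?thesis using K2[OF j, of 1 2 3 4 5] K2[OF j, of 2 1 3 4 5] by simp
          next
            case 2 thus ?thesis using K2[OF j, of 1 2 4 3 5] K2[OF j, of 2 1 4 3 5] by simp
          next
            case 3 thus ?thesis using K2[OF j, of 1 2 5 3 4] K2[OF j, of 2 1 5 3 4] by simp
          qed
        qed
        thus False using w(2) CV True by simp
      qed
    next
      case (XV i a)
      have i: "i < n" and a15: "1 \<le> a" "a \<le> 5" using wV XV by (auto simp: GV_simps)
      consider "a \<in> {3,4,5}" | "a = 1" | "a = 2" using a15 by force
      thus False
      proof cases
        case 1
        thus False using K3[OF j i, of 1 2 a] K3[OF j i, of 2 1 a] w(2) XV by auto
      next
        case 2
        have s: "\<sigma> i" using w(1) XV 2 by (simp add: \<sigma>_def)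
        have nT: "(i, True) \<notin> cs ! j" using uns s by blast
        show False
        proof (cases "(i, False) \<in> cs ! j")
          case True
          thus False using K6a[OF j True] K6b[OF j True] w(2) XV 2 by simp
        next
          case False
          have v: "CV j 1 \<in> {CV j 1, CV j 2}" "CV j 2 \<in> {CV j 1, CV j 2}" by auto
          show False using K4a[OF j i nT False v(1)] K4a[OF j i nT False v(2)] w(2) XV 2 by simp
        qed
      next
        case 3
        have s: "\<not> \<sigma> i" using w(1) XV 3 X12[OF i] by (auto simp: \<sigma>_def)
        have nF: "(i, False) \<notin> cs ! j" using uns s by blast
        show False
        proof (cases "(i, True) \<in> cs ! j")
          case True
          thus False using K5a[OF j True] K5b[OF j True] w(2) XV 3 by simp
        next
          case False
          have v: "CV j 1 \<in> {CV j 1, CV j 2}" "CV j 2 \<in> {CV j 1, CV j 2}" by auto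
          show False using K4b[OF j i False nF v(1)] K4b[OF j i False nF v(2)] w(2) XV 3 by simp
        qed
      qed
    qed
  qed
qed


end

theorem mainTheorem16:
  fixes n :: nat and cs :: "clause list"
  assumes "sat3_instance n cs"
    and "cdim (GV n cs) (GE n cs) = 2 * (length cs + n)"
  shows "satisfiable cs"
proof -
  let ?V = "GV n cs" and ?E = "GE n cs"
  let ?P = "\<lambda>k. \<exists>W. resolving ?V ?E W \<and> finite W \<and> card W = k"
  have "resolving ?V ?E ?V"
    unfolding resolving_def
  proof (intro conjI ballI impI subset_refl)
    fix v1 v2 assume v: "v1 \<in> ?V" "v2 \<in> ?V" and eq: "\<forall>w\<in>?V. kappa ?V ?E v1 w = kappa ?V ?E v2 w"
    have "kappa ?V ?E v2 v1 = \<infinity>" using eq v(1) kappa_refl[of ?V ?E v1] by simp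
    thus "v1 = v2" using kappa_fin[of v2 v1 ?V ?E] by auto
  qed
  hence "?P (card ?V)" using GV_finite by blast
  hence "?P (LEAST k. ?P k)" by (rule LeastI)
  then obtain W where W: "resolving ?V ?E W" "finite W" "card W = cdim ?V ?E"
    unfolding cdim_def by blast
  show ?thesis using main_res[OF assms(1) W(1) W(2)] W(3) assms(2) by simp
qed

end
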